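(* Let $V,V'$ be locally convex spaces, $\Omega\subset V$, $\Omega'\subset V'$ open, and let $g,g'$ be Riemannian metrics on $\Omega,\Omega'$ with Levi–Civita connections $D,D'$ of class $C^1$. Suppose $F\colon\Omega'\to\Omega$ is a $C^2$ isometry. If $y\colon I\to\Omega'$ is a $C^1$ curve on an interval $I$ and $\eta\colon I\to V'$ is a $D'$-parallel lift of $y$, then $\xi(t)=F_*|_{y(t)}\eta(t)$ defines a $D$-parallel lift $\xi\colon I\to V$ of $F\circ y$. In particular, if $y$ is a geodesic for $g'$, then $F\circ y$ is a geodesic for $g$.
   Context: All locally convex spaces are real, Hausdorff and sequentially complete. $f$ is $C^1$ if directional derivatives $df(v,\xi)=\lim_{t\to0}(f(v+t\xi)-f(v))/t$ exist and $df$ is continuous; $C^k$ inductively; $F_*|_w=dF(w,\cdot)$. A Riemannian metric on $\Omega$ is a map $g\colon\Omega\times V\times V\to\mathbb R$ with each $g(v,\cdot,\cdot)$ positive definite symmetric bilinear. A connection on $\Omega\times V\to\Omega$ is $D_\xi\varphi(v)=d\varphi(v,\xi)+A(v,\xi)\varphi(v)$ with $A(v,\xi)$ a continuous linear map $V\to V$, linear in $\xi$, $(v,\xi,w)\mapsto A(v,\xi)w$ continuous; of class $C^k$ if this map is $C^k$. For a $C^1$ metric $g$, a Levi–Civita connection is such a $D$ with $A(v,\xi)\eta=A(v,\eta)\xi$ and $\xi g(\cdot,\varphi,\psi)=g(\cdot,D_\xi\varphi,\psi)+g(\cdot,\varphi,D_\xi\psi)$ for all $\xi\in V$, $\varphi,\psi\in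 C^1(\Omega,V)$. For a $C^1$ curve $x\colon I\to\Omega$, a $D$-parallel lift is a $C^1$ map $\xi\colon I\to V$ with $\dot\xi+A(x,\dot x)\xi=0$. A geodesic is a $C^2$ curve $x$ with $\ddot x+A(x,\dot x)\dot x=0$. A $C^2$ isometry $F\colon\Omega'\to\Omega$ is a $C^2$ diffeomorphism of $\Omega'$ onto an open subset of $\Omega$ with $g(F(w),dF(w,\zeta),dF(w,\zeta))=g'(w,\zeta,\zeta)$ for all $w\in\Omega'$, $\zeta\in V'$. *)

theory Defs
  imports "HOL-Analysis.Analysis"
begin

definition lcs_space :: "'a::{real_vector,t2_space} itself \<Rightarrow> bool" where
  "lcs_space _ \<longleftrightarrow>
     \<comment> \<open>topological vector space: addition and scalar multiplication jointly continuous\<close>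
     (\<forall>x y::'a. ((\<lambda>p. fst p + snd p) \<longlongrightarrow> x + y) (nhds x \<times>\<^sub>F nhds y))
   \<and> (\<forall>(r::real) (x::'a). ((\<lambda>p. fst p *\<^sub>R snd p) \<longlongrightarrow> r *\<^sub>R x) (nhds r \<times>\<^sub>F nhds x))
     \<comment> \<open>locally convex\<close>
   \<and> (\<forall>U::'a set. open U \<and> 0 \<in> U \<longrightarrow> (\<exists>W. open W \<and> convex W \<and> 0 \<in> W \<and> W \<subseteq> U))
     \<comment> \<open>sequentially complete\<close>
   \<and> (\<forall>X::nat \<Rightarrow> 'a. (\<forall>U. open U \<and> 0 \<in> U \<longrightarrow> (\<exists>N. \<forall>m\<ge>N. \<forall>n\<ge>N. X m - X n \<in> U))
         \<longrightarrow> (\<exists>L. X \<longlonglongrightarrow> L))"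

definition diffquot :: "('a::real_vector \<Rightarrow> 'b::real_vector) \<Rightarrow> 'a \<Rightarrow> 'a \<Rightarrow> real \<Rightarrow> 'b" where
  "diffquot f v \<xi> t = inverse t *\<^sub>R (f (v + t *\<^sub>R \<xi>) - f v)"

definition dd :: "('a::{real_vector,topological_space} \<Rightarrow> 'b::{real_vector,t2_space}) \<Rightarrow> 'a \<Rightarrow> 'a \<Rightarrow> 'b" where
  "dd f v \<xi> = Lim (at (0::real)) (diffquot f v \<xi>)"

definition C1 :: "'a::{real_vector,topological_space} set \<Rightarrow> ('a \<Rightarrow> 'b::{real_vector,t2_space}) \<Rightarrow> bool" where
  "C1 U f \<longleftrightarrow> (\<forall>v\<in>U. \<forall>\<xi>. \<exists>l. (diffquot f v \<xi> \<longlongrightarrow> l) (at (0::real)))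
     \<and> continuous_on (U \<times> UNIV) (\<lambda>(v, \<xi>). dd f v \<xi>)"

definition C2 :: "'a::{real_vector,topological_space} set \<Rightarrow> ('a \<Rightarrow> 'b::{real_vector,t2_space}) \<Rightarrow> bool" where
  "C2 U f \<longleftrightarrow> C1 U f \<and> C1 (U \<times> UNIV) (\<lambda>(v, \<xi>). dd f v \<xi>)"

definition cderiv :: "(real \<Rightarrow> 'a::{real_vector,t2_space}) \<Rightarrow> real set \<Rightarrow> real \<Rightarrow> 'a" where
  "cderiv x I t = Lim (at t within I) (\<lambda>s. inverse (s - t) *\<^sub>R (x s - x t))"

definition C1_curve :: "real set \<Rightarrow> (real \<Rightarrow> 'a::{real_vector,t2_space}) \<Rightarrow> bool" where
  "C1_curve I x \<longleftrightarrow> (\<forall>t\<in>I. \<exists>l. ((\<lambda>s. inverse (s - t) *\<^sub>R (x s - x t)) \<longlongrightarrow> l) (at t within I))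
     \<and> continuous_on I (cderiv x I)"

definition C2_curve :: "real set \<Rightarrow> (real \<Rightarrow> 'a::{real_vector,t2_space}) \<Rightarrow> bool" where
  "C2_curve I x \<longleftrightarrow> C1_curve I x \<and> C1_curve I (cderiv x I)"

definition riemannian_metric :: "'a::{real_vector,t2_space} set \<Rightarrow> ('a \<Rightarrow> 'a \<Rightarrow> 'a \<Rightarrow> real) \<Rightarrow> bool" where
  "riemannian_metric \<Omega> g \<longleftrightarrow> (\<forall>v\<in>\<Omega>.
      (\<forall>\<xi>. linear (g v \<xi>)) \<and> (\<forall>\<eta>. linear (\<lambda>\<xi>. g v \<xi> \<eta>))
    \<and> (\<forall>\<xi> \<eta>. g v \<xi> \<eta> = g v \<eta> \<xi>)
    \<and> (\<forall>\<xi>. \<xi> \<noteq> 0 \<longrightarrow> g v \<xi> \<xi> > 0))"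

text \<open>A connection D_xi phi (v) = d phi (v,xi) + A(v,xi) phi(v), represented by A v xi w.\<close>
definition connection :: "'a::{real_vector,t2_space} set \<Rightarrow> ('a \<Rightarrow> 'a \<Rightarrow> 'a \<Rightarrow> 'a) \<Rightarrow> bool" where
  "connection \<Omega> A \<longleftrightarrow>
     (\<forall>v\<in>\<Omega>. \<forall>\<xi>. linear (A v \<xi>) \<and> continuous_on UNIV (A v \<xi>))
   \<and> (\<forall>v\<in>\<Omega>. \<forall>w. linear (\<lambda>\<xi>. A v \<xi> w))
   \<and> continuous_on (\<Omega> \<times> UNIV \<times> UNIV) (\<lambda>(v, \<xi>, w). A v \<xi> w)"

definition covd :: "('a::{real_vector,t2_space} \<Rightarrow> 'a \<Rightarrow> 'a \<Rightarrow> 'a) \<Rightarrow> 'a \<Rightarrow> ('a \<Rightarrow> 'a) \<Rightarrow> 'a \<Rightarrow> 'a" where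
  "covd A \<xi> \<phi> v = dd \<phi> v \<xi> + A v \<xi> (\<phi> v)"

definition C1_connection :: "'a::{real_vector,t2_space} set \<Rightarrow> ('a \<Rightarrow> 'a \<Rightarrow> 'a \<Rightarrow> 'a) \<Rightarrow> bool" where
  "C1_connection \<Omega> A \<longleftrightarrow> connection \<Omega> A \<and> C1 (\<Omega> \<times> UNIV \<times> UNIV) (\<lambda>(v, \<xi>, w). A v \<xi> w)"

definition C1_metric :: "'a::{real_vector,t2_space} set \<Rightarrow> ('a \<Rightarrow> 'a \<Rightarrow> 'a \<Rightarrow> real) \<Rightarrow> bool" where
  "C1_metric \<Omega> g \<longleftrightarrow> riemannian_metric \<Omega> g \<and> C1 (\<Omega> \<times> UNIV \<times> UNIV) (\<lambda>(v, \<xi>, \<eta>). g v \<xi> \<eta>)"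

definition levi_civita :: "'a::{real_vector,t2_space} set \<Rightarrow> ('a \<Rightarrow> 'a \<Rightarrow> 'a \<Rightarrow> real) \<Rightarrow> ('a \<Rightarrow> 'a \<Rightarrow> 'a \<Rightarrow> 'a) \<Rightarrow> bool" where
  "levi_civita \<Omega> g A \<longleftrightarrow> C1_metric \<Omega> g \<and> connection \<Omega> A
   \<and> (\<forall>v\<in>\<Omega>. \<forall>\<xi> \<eta>. A v \<xi> \<eta> = A v \<eta> \<xi>)
   \<and> (\<forall>\<xi> \<phi> \<psi>. C1 \<Omega> \<phi> \<longrightarrow> C1 \<Omega> \<psi> \<longrightarrow>
        (\<forall>v\<in>\<Omega>. dd (\<lambda>u. g u (\<phi> u) (\<psi> u)) v \<xi>
                 = g v (covd A \<xi> \<phi> v) (\<psi> v) + g v (\<phi> v) (covd A \<xi> \<psi> v)))"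

definition parallel_lift :: "'a::{real_vector,t2_space} set \<Rightarrow> ('a \<Rightarrow> 'a \<Rightarrow> 'a \<Rightarrow> 'a) \<Rightarrow> real set \<Rightarrow> (real \<Rightarrow> 'a) \<Rightarrow> (real \<Rightarrow> 'a) \<Rightarrow> bool" where
  "parallel_lift \<Omega> A I x \<xi> \<longleftrightarrow> (\<forall>t\<in>I. x t \<in> \<Omega>) \<and> C1_curve I x \<and> C1_curve I \<xi>
     \<and> (\<forall>t\<in>I. cderiv \<xi> I t + A (x t) (cderiv x I t) (\<xi> t) = 0)"

definition geodesic :: "'a::{real_vector,t2_space} set \<Rightarrow> ('a \<Rightarrow> 'a \<Rightarrow> 'a \<Rightarrow> 'a) \<Rightarrow> real set \<Rightarrow> (real \<Rightarrow> 'a) \<Rightarrow> bool" where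
  "geodesic \<Omega> A I x \<longleftrightarrow> (\<forall>t\<in>I. x t \<in> \<Omega>) \<and> C2_curve I x
     \<and> (\<forall>t\<in>I. cderiv (cderiv x I) I t + A (x t) (cderiv x I t) (cderiv x I t) = 0)"

definition C2_diffeo_onto_open :: "'b::{real_vector,t2_space} set \<Rightarrow> 'a::{real_vector,t2_space} set \<Rightarrow> ('b \<Rightarrow> 'a) \<Rightarrow> bool" where
  "C2_diffeo_onto_open \<Omega>' \<Omega> F \<longleftrightarrow> open (F ` \<Omega>') \<and> F ` \<Omega>' \<subseteq> \<Omega> \<and> inj_on F \<Omega>'
     \<and> C2 \<Omega>' F \<and> C2 (F ` \<Omega>') (the_inv_into \<Omega>' F)"

definition C2_isometry :: "'b::{real_vector,t2_space} set \<Rightarrow> ('b \<Rightarrow> 'b \<Rightarrow> 'b \<Rightarrow> real) \<Rightarrow> 'a::{real_vector,t2_space} set \<Rightarrow> ('a \<Rightarrow> 'a \<Rightarrow> 'a \<Rightarrow> real) \<Rightarrow> ('b \<Rightarrow> 'a) \<Rightarrow> bool" where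
  "C2_isometry \<Omega>' g' \<Omega> g F \<longleftrightarrow> C2_diffeo_onto_open \<Omega>' \<Omega> F
     \<and> (\<forall>w\<in>\<Omega>'. \<forall>\<zeta>. g (F w) (dd F w \<zeta>) (dd F w \<zeta>) = g' w \<zeta> \<zeta>)"

end

theory Submission
  imports Defs
begin

definition tvs :: "'a::{real_vector,topological_space} itself \<Rightarrow> bool" where
  "tvs _ \<longleftrightarrow> continuous_on UNIV (\<lambda>p::'a\<times>'a. fst p + snd p)
             \<and> continuous_on UNIV (\<lambda>p::real\<times>'a. fst p *\<^sub>R snd p)"

definition lc :: "'a::{real_vector,topological_space} itself \<Rightarrow> bool" where
  "lc _ \<longleftrightarrow> (\<forall>U::'a set. open U \<and> 0 \<in> U \<longrightarrow> (\<exists>W. open W \<and> convex W \<and> 0 \<in> W \<and> W \<subseteq> U))"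

lemma tvs_add:
  fixes f g :: "'i \<Rightarrow> 'a::{real_vector,topological_space}"
  assumes "tvs TYPE('a)" "(f \<longlongrightarrow> a) F" "(g \<longlongrightarrow> b) F"
  shows "((\<lambda>x. f x + g x) \<longlongrightarrow> a + b) F"
proof -
  have c: "continuous_on UNIV (\<lambda>p::'a\<times>'a. fst p + snd p)" using assms(1) by (simp add: tvs_def)
  have "((\<lambda>x. fst (f x, g x) + snd (f x, g x)) \<longlongrightarrow> fst (a,b) + snd (a,b)) F"
    by (rule continuous_on_tendsto_compose[OF c tendsto_Pair[OF assms(2,3)]]) auto
  then show ?thesis by simp
qed

lemma tvs_scaleR:
  fixes f :: "'i \<Rightarrow> real" and g :: "'i \<Rightarrow> 'a::{real_vector,topological_space}"
  assumes "tvs TYPE('a)" "(f \<longlongrightarrow> a) F" "(g \<longlongrightarrow> b) F"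
  shows "((\<lambda>x. f x *\<^sub>R g x) \<longlongrightarrow> a *\<^sub>R b) F"
proof -
  have c: "continuous_on UNIV (\<lambda>p::real\<times>'a. fst p *\<^sub>R snd p)" using assms(1) by (simp add: tvs_def)
  have "((\<lambda>x. fst (f x, g x) *\<^sub>R snd (f x, g x)) \<longlongrightarrow> fst (a,b) *\<^sub>R snd (a,b)) F"
    by (rule continuous_on_tendsto_compose[OF c tendsto_Pair[OF assms(2,3)]]) auto
  then show ?thesis by simp
qed

lemma tvs_minus:
  fixes f :: "'i \<Rightarrow> 'a::{real_vector,topological_space}"
  assumes "tvs TYPE('a)" "(f \<longlongrightarrow> a) F"
  shows "((\<lambda>x. - f x) \<longlongrightarrow> - a) F"
  using tvs_scaleR[OF assms(1) tendsto_const[of "-1"] assms(2)] by simp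

lemma tvs_diff:
  fixes f g :: "'i \<Rightarrow> 'a::{real_vector,topological_space}"
  assumes "tvs TYPE('a)" "(f \<longlongrightarrow> a) F" "(g \<longlongrightarrow> b) F"
  shows "((\<lambda>x. f x - g x) \<longlongrightarrow> a - b) F"
  using tvs_add[OF assms(1,2) tvs_minus[OF assms(1,3)]] by simp

lemma tvs_cont_tendsto:
  assumes "continuous_on UNIV f" "(g \<longlongrightarrow> l) F" shows "((\<lambda>x. f (g x)) \<longlongrightarrow> f l) F"
  using continuous_on_tendsto_compose[OF assms] by auto

lemma lcs_tvs: "lcs_space TYPE('a::{real_vector,t2_space}) \<Longrightarrow> tvs TYPE('a)"
proof -
  assume a: "lcs_space TYPE('a)"
  have 1: "((\<lambda>p::'a\<times>'a. fst p + snd p) \<longlongrightarrow> fst q + snd q) (nhds q)" for q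
    using a unfolding lcs_space_def by (cases q) (simp add: nhds_prod)
  have 2: "((\<lambda>p::real\<times>'a. fst p *\<^sub>R snd p) \<longlongrightarrow> fst q *\<^sub>R snd q) (nhds q)" for q
    using a unfolding lcs_space_def by (cases q) (simp add: nhds_prod)
  show ?thesis unfolding tvs_def continuous_on_def
    using tendsto_mono[OF at_within_le_nhds 1] tendsto_mono[OF at_within_le_nhds 2] by blast
qed

lemma lcs_lc: "lcs_space TYPE('a::{real_vector,t2_space}) \<Longrightarrow> lc TYPE('a)"
  unfolding lcs_space_def lc_def by blast

lemma tvs_real: "tvs TYPE(real)"
  unfolding tvs_def by (intro conjI continuous_intros)

lemma lc_real: "lc TYPE(real)"
  unfolding lc_def
proof (intro allI impI)
  fix U :: "real set" assume "open U \<and> 0 \<in> U"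
  then obtain e where "e>0" "ball 0 e \<subseteq> U" by (meson open_contains_ball)
  then show "\<exists>W. open W \<and> convex W \<and> 0 \<in> W \<and> W \<subseteq> U"
    by (intro exI[of _ "ball 0 e"]) auto
qed

lemma tvsI:
  assumes "\<And>q. ((\<lambda>p::'a\<times>'a. fst p + snd p) \<longlongrightarrow> fst q + snd q) (at q)"
      and "\<And>q. ((\<lambda>p::real\<times>'a. fst p *\<^sub>R snd p) \<longlongrightarrow> fst q *\<^sub>R snd q) (at q)"
  shows "tvs TYPE('a::{real_vector,topological_space})"
  unfolding tvs_def continuous_on_def using assms by auto

lemma tvs_prod:
  assumes "tvs TYPE('a::{real_vector,topological_space})" "tvs TYPE('b::{real_vector,topological_space})"
  shows "tvs TYPE('a \<times> 'b)"
proof (rule tvsI)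
  fix q :: "('a\<times>'b)\<times>('a\<times>'b)"
  have f: "((\<lambda>p. fst p) \<longlongrightarrow> fst q) (at q)" "((\<lambda>p. snd p) \<longlongrightarrow> snd q) (at q)"
    by (auto intro!: tendsto_intros)
  have "((\<lambda>p. (fst (fst p) + fst (snd p), snd (fst p) + snd (snd p))) \<longlongrightarrow>
        (fst (fst q) + fst (snd q), snd (fst q) + snd (snd q))) (at q)"
    by (intro tendsto_Pair tvs_add assms tendsto_fst tendsto_snd f)
  then show "((\<lambda>p. fst p + snd p) \<longlongrightarrow> fst q + snd q) (at q)"
    by (simp add: plus_prod_def)
next
  fix q :: "real\<times>('a\<times>'b)"
  have f: "((\<lambda>p. fst p) \<longlongrightarrow> fst q) (at q)" "((\<lambda>p. snd p) \<longlongrightarrow> snd q) (at q)"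
    by (auto intro!: tendsto_intros)
  have "((\<lambda>p. (fst p *\<^sub>R fst (snd p), fst p *\<^sub>R snd (snd p))) \<longlongrightarrow>
        (fst q *\<^sub>R fst (snd q), fst q *\<^sub>R snd (snd q))) (at q)"
    by (intro tendsto_Pair tvs_scaleR assms tendsto_fst tendsto_snd f)
  then show "((\<lambda>p. fst p *\<^sub>R snd p) \<longlongrightarrow> fst q *\<^sub>R snd q) (at q)"
    by (simp add: scaleR_prod_def)
qed

lemma lc_prod:
  assumes "lc TYPE('a::{real_vector,topological_space})" "lc TYPE('b::{real_vector,topological_space})"
  shows "lc TYPE('a \<times> 'b)"
  unfolding lc_def
proof (intro allI impI)
  fix U :: "('a\<times>'b) set" assume "open U \<and> 0 \<in> U"
  then obtain A B where AB: "open A" "open B" "(0,0) \<in> A \<times> B" "A \<times> B \<subseteq> U"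
    by (metis open_prod_elim zero_prod_def)
  obtain W1 where W1: "open W1" "convex W1" "0 \<in> W1" "W1 \<subseteq> A" using assms(1) AB unfolding lc_def by auto
  obtain W2 where W2: "open W2" "convex W2" "0 \<in> W2" "W2 \<subseteq> B" using assms(2) AB unfolding lc_def by auto
  show "\<exists>W. open W \<and> convex W \<and> 0 \<in> W \<and> W \<subseteq> U"
    by (rule exI[of _ "W1 \<times> W2"]) (use W1 W2 AB in \<open>auto simp: open_Times convex_Times zero_prod_def\<close>)
qed

lemma at_right_bot_neq: "at_right (x::real) \<noteq> bot" by simp

lemma tvs_contI:
  fixes f :: "'a::topological_space \<Rightarrow> 'b::topological_space"
  assumes "\<And>x. (f \<longlongrightarrow> f x) (at x)" shows "continuous_on UNIV f"
  using assms unfolding continuous_on_def by auto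

lemma open_vimage_UNIV: "continuous_on UNIV f \<Longrightarrow> open B \<Longrightarrow> open (f -` B)"
  using continuous_on_open_vimage[of UNIV f] by auto

lemma nbhd_W:
  fixes Z :: "'a::{real_vector,topological_space} set"
  assumes tv: "tvs TYPE('a)" and l: "lc TYPE('a)" and Z: "open Z" "y \<in> Z"
  shows "\<exists>W. open W \<and> convex W \<and> 0 \<in> W \<and> (\<forall>x\<in>W. - x \<in> W) \<and> (\<forall>x\<in>W. y + c *\<^sub>R x \<in> Z)"
proof -
  have cont: "continuous_on UNIV (\<lambda>x::'a. y + c *\<^sub>R x)"
    by (intro tvs_contI tvs_add[OF tv] tvs_scaleR[OF tv] tendsto_const tendsto_ident_at)
  have "open ((\<lambda>x::'a. y + c *\<^sub>R x) -` Z)" by (rule open_vimage_UNIV[OF cont Z(1)])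
  moreover have "0 \<in> (\<lambda>x::'a. y + c *\<^sub>R x) -` Z" using Z by simp
  ultimately obtain W0 where W0: "open W0" "convex W0" "0 \<in> W0" "W0 \<subseteq> (\<lambda>x::'a. y + c *\<^sub>R x) -` Z"
    using l unfolding lc_def by blast
  have contm: "continuous_on UNIV (\<lambda>x::'a. - x)"
    by (intro tvs_contI tvs_minus[OF tv] tendsto_ident_at)
  have eq: "(\<lambda>x. - x) ` W0 = (\<lambda>x. - x) -` W0" by force
  let ?W = "W0 \<inter> (\<lambda>x. - x) ` W0"
  have "open ?W" unfolding eq by (intro open_Int W0 open_vimage_UNIV[OF contm])
  moreover have "convex ?W" by (intro convex_Int convex_negations W0)
  moreover have "0 \<in> ?W" using W0 by (simp add: eq)
  moreover have "\<forall>x\<in>?W. - x \<in> ?W" by (auto simp: eq)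
  moreover have "\<forall>x\<in>?W. y + c *\<^sub>R x \<in> Z" using W0 by auto
  ultimately show ?thesis by blast
qed

definition gaugeW :: "'a::real_vector set \<Rightarrow> 'a \<Rightarrow> real" where
  "gaugeW W x = Inf {t. 0 < t \<and> inverse t *\<^sub>R x \<in> W}"

locale gw =
  fixes W :: "'a::{real_vector,topological_space} set"
  assumes tv: "tvs TYPE('a)" and op: "open W" and cv: "convex W" and z: "0 \<in> W"
    and sy: "\<And>x. x \<in> W \<Longrightarrow> - x \<in> W"
begin

lemma ne: "\<exists>t>0. inverse t *\<^sub>R x \<in> W"
proof -
  have "((\<lambda>r::real. r *\<^sub>R x) \<longlongrightarrow> 0 *\<^sub>R x) (at_right 0)"
    by (intro tvs_scaleR[OF tv] tendsto_const) (simp add: tendsto_ident_at tendsto_mono[OF at_le])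
  then have "eventually (\<lambda>r. r *\<^sub>R x \<in> W) (at_right 0)" using op z
    by (simp add: tendsto_def)
  moreover have "eventually (\<lambda>r::real. r > 0) (at_right 0)" by (simp add: eventually_at_right_less)
  ultimately have "eventually (\<lambda>r::real. r > 0 \<and> r *\<^sub>R x \<in> W) (at_right 0)" by (simp add: eventually_conj_iff)
  then obtain r::real where "r > 0" "r *\<^sub>R x \<in> W" using eventually_happens'[OF at_right_bot_neq] by blast
  then show ?thesis by (intro exI[of _ "inverse r"]) auto
qed

lemma set_ne: "{t. 0 < t \<and> inverse t *\<^sub>R x \<in> W} \<noteq> {}" using ne by auto
lemma set_bdd: "bdd_below {t. 0 < t \<and> inverse t *\<^sub>R x \<in> W}" by (rule bdd_belowI[of _ 0]) auto

lemma nonneg: "0 \<le> gaugeW W x"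
  unfolding gaugeW_def by (rule cInf_greatest[OF set_ne]) auto

lemma mono: assumes "0 < t" "t \<le> t'" "inverse t *\<^sub>R x \<in> W" shows "inverse t' *\<^sub>R x \<in> W"
proof -
  have "(t / t') *\<^sub>R (inverse t *\<^sub>R x) + (1 - t / t') *\<^sub>R 0 \<in> W"
    using assms by (intro convexD[OF cv] z) auto
  then have P: "(t / t') *\<^sub>R (inverse t *\<^sub>R x) \<in> W" by (simp only: scaleR_zero_right add_0_right)
  have "t / t' * inverse t = inverse t'" using assms by (simp add: field_simps)
  then have "(t / t') *\<^sub>R (inverse t *\<^sub>R x) = inverse t' *\<^sub>R x" by (simp only: scaleR_scaleR)
  with P show ?thesis by (simp only:)
qed

lemma lt_mem: assumes "gaugeW W x < r" "0 < r" shows "inverse r *\<^sub>R x \<in> W"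
proof -
  obtain t where "0 < t" "inverse t *\<^sub>R x \<in> W" "t < r"
    using assms(1) unfolding gaugeW_def cInf_less_iff[OF set_ne set_bdd] by auto
  then show ?thesis using mono[of t r x] by auto
qed

lemma mem_lt: assumes "inverse r *\<^sub>R x \<in> W" "0 < r" shows "gaugeW W x < r"
proof -
  let ?u = "inverse r *\<^sub>R x"
  have "((\<lambda>d::real. (1 + d) *\<^sub>R ?u) \<longlongrightarrow> (1 + 0) *\<^sub>R ?u) (at_right 0)"
    by (intro tvs_scaleR[OF tv] tendsto_const tendsto_add) (simp add: tendsto_ident_at tendsto_mono[OF at_le])
  then have "eventually (\<lambda>d. (1 + d) *\<^sub>R ?u \<in> W) (at_right 0)" using op assms
    by (simp add: tendsto_def)
  moreover have "eventually (\<lambda>r::real. r > 0) (at_right 0)" by (simp add: eventually_at_right_less)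
  ultimately have "eventually (\<lambda>d::real. d > 0 \<and> (1 + d) *\<^sub>R ?u \<in> W) (at_right 0)" by (simp add: eventually_conj_iff)
  then obtain d::real where d: "d > 0" "(1 + d) *\<^sub>R ?u \<in> W" using eventually_happens'[OF at_right_bot_neq] by blast
  have "inverse (r / (1 + d)) *\<^sub>R x = (1 + d) *\<^sub>R ?u" using d assms by (simp add: field_simps)
  then have "r / (1 + d) \<in> {t. 0 < t \<and> inverse t *\<^sub>R x \<in> W}" using d assms by auto
  then have "gaugeW W x \<le> r / (1 + d)" unfolding gaugeW_def by (rule cInf_lower[OF _ set_bdd])
  also have "\<dots> < r" using d assms by (simp add: field_simps)
  finally show ?thesis .
qed

lemma add: "gaugeW W (x + y) \<le> gaugeW W x + gaugeW W y"
proof (rule field_le_epsilon)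
  fix e :: real assume e: "0 < e"
  define a where "a = gaugeW W x + e/2"
  define b where "b = gaugeW W y + e/2"
  have a: "a > 0" "inverse a *\<^sub>R x \<in> W" using nonneg[of x] e lt_mem[of x a] by (auto simp: a_def)
  have b: "b > 0" "inverse b *\<^sub>R y \<in> W" using nonneg[of y] e lt_mem[of y b] by (auto simp: b_def)
  have "(a / (a+b)) *\<^sub>R (inverse a *\<^sub>R x) + (b / (a+b)) *\<^sub>R (inverse b *\<^sub>R y) \<in> W"
  proof (intro convexD[OF cv] a(2) b(2))
    have ab: "a + b > 0" using a b by simp
    show "0 \<le> a / (a + b)" "0 \<le> b / (a + b)" using a b ab by simp_all
    show "a / (a + b) + b / (a + b) = 1" using ab by (simp add: add_divide_distrib[symmetric])
  qed
  moreover have "a / (a+b) * inverse a = inverse (a+b)" "b / (a+b) * inverse b = inverse (a+b)"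
    using a b by (simp_all add: field_simps)
  then have "(a / (a+b)) *\<^sub>R (inverse a *\<^sub>R x) + (b / (a+b)) *\<^sub>R (inverse b *\<^sub>R y) = inverse (a+b) *\<^sub>R (x+y)"
    by (simp only: scaleR_scaleR scaleR_right_distrib)
  ultimately have "gaugeW W (x + y) < a + b" using a b by (intro mem_lt) auto
  then show "gaugeW W (x + y) \<le> gaugeW W x + gaugeW W y + e" by (simp add: a_def b_def)
qed

lemma neg: "gaugeW W (- x) = gaugeW W x"
proof -
  have "{t. 0 < t \<and> inverse t *\<^sub>R (- x) \<in> W} = {t. 0 < t \<and> inverse t *\<^sub>R x \<in> W}"
  proof -
    have "(- z \<in> W) = (z \<in> W)" for z using sy[of z] sy[of "-z"] by auto
    then show ?thesis by simp
  qed
  then show ?thesis by (simp add: gaugeW_def)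
qed

end

lemma real_right_mono:
  fixes \<psi> :: "real \<Rightarrow> real"
  assumes ab: "a \<le> b" and c: "continuous_on {a..b} \<psi>"
    and r: "\<And>t. t \<in> {a..<b} \<Longrightarrow> eventually (\<lambda>s. \<psi> s \<le> \<psi> t) (at_right t)"
  shows "\<psi> b \<le> \<psi> a"
proof (rule ccontr)
  assume "\<not> \<psi> b \<le> \<psi> a"
  define c where "c = (\<psi> a + \<psi> b) / 2"
  have ca: "\<psi> a < c" "c < \<psi> b" using \<open>\<not> \<psi> b \<le> \<psi> a\<close> by (auto simp: c_def)
  define S where "S = {a..b} \<inter> \<psi> -` {..c}"
  have cl: "closed S" unfolding S_def by (intro continuous_closed_preimage c closed_atLeastAtMost closed_atMost)
  have aS: "a \<in> S" using ab ca by (simp add: S_def)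
  have bdd: "bdd_above S" by (rule bdd_aboveI[of _ b]) (simp add: S_def)
  define m where "m = Sup S"
  have mS: "m \<in> S" unfolding m_def using closed_contains_Sup[OF _ bdd cl] aS by blast
  then have m1: "a \<le> m" "m \<le> b" "\<psi> m \<le> c" by (simp_all add: S_def)
  have "m \<noteq> b" using m1 ca by force
  then have mb: "m < b" using m1 by simp
  have ev: "eventually (\<lambda>s. \<psi> s \<le> \<psi> m) (at_right m)" using r[of m] m1 mb by simp
  then obtain d where d: "d > m" "\<And>s. s > m \<Longrightarrow> s < d \<Longrightarrow> \<psi> s \<le> \<psi> m"
    using ev unfolding eventually_at_right[OF mb] by blast
  define s where "s = (m + min d b) / 2"
  have s: "m < s" "s < d" "s < b" using d mb by (auto simp: s_def)
  have "\<psi> s \<le> c" using d(2)[OF s(1,2)] m1 by simp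
  then have "s \<in> S" using s m1 by (simp add: S_def)
  then have "s \<le> m" unfolding m_def by (rule cSup_upper[OF _ bdd])
  then show False using s by simp
qed

lemma shift0_tendsto:
  fixes f :: "real \<Rightarrow> 'b::topological_space"
  assumes "((\<lambda>r. f (t + r)) \<longlongrightarrow> l) (at 0)" shows "(f \<longlongrightarrow> l) (at t)"
  using assms by (subst at_to_0) (simp add: filterlim_filtermap add.commute)

lemma shift0_eventually:
  assumes "eventually P (at (0::real))" shows "eventually (\<lambda>s. P (s - t)) (at t)"
  using assms by (subst at_to_0) (simp add: eventually_filtermap)

lemma at0_neq: "eventually (\<lambda>r::real. r \<noteq> 0) (at 0)"
  by (simp add: eventually_at_filter)

lemma at_right_le_at: "at_right (x::real) \<le> at x" by (rule at_le) simp

context gw begin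

lemma cont_of_deriv:
  fixes h :: "real \<Rightarrow> 'a"
  assumes "((\<lambda>r. inverse r *\<^sub>R (h (t + r) - h t)) \<longlongrightarrow> d) (at 0)"
  shows "(h \<longlongrightarrow> h t) (at t)"
proof -
  have "((\<lambda>r. r *\<^sub>R (inverse r *\<^sub>R (h (t + r) - h t))) \<longlongrightarrow> 0 *\<^sub>R d) (at 0)"
    using tvs_scaleR[OF tv _ assms, of "\<lambda>r. r" 0] by (simp add: tendsto_ident_at)
  moreover have "eventually (\<lambda>r. r *\<^sub>R (inverse r *\<^sub>R (h (t + r) - h t)) = h (t + r) - h t) (at 0)"
    using at0_neq by (rule eventually_mono) simp
  ultimately have "((\<lambda>r. h (t + r) - h t) \<longlongrightarrow> 0 *\<^sub>R d) (at 0)"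
    by (rule Lim_transform_eventually)
  then have "((\<lambda>r. h (t + r) - h t) \<longlongrightarrow> 0) (at 0)" by simp
  then have "((\<lambda>r. (h (t + r) - h t) + h t) \<longlongrightarrow> 0 + h t) (at 0)"
    by (rule tvs_add[OF tv _ tendsto_const])
  then have "((\<lambda>r. h (t + r)) \<longlongrightarrow> h t) (at 0)" by (simp only: diff_add_cancel add_0_left)
  then show ?thesis by (rule shift0_tendsto)
qed

lemma mvt:
  fixes h h' :: "real \<Rightarrow> 'a"
  assumes d: "\<And>t. t \<in> {0..1} \<Longrightarrow> ((\<lambda>r. inverse r *\<^sub>R (h (t + r) - h t)) \<longlongrightarrow> h' t) (at 0)"
    and dW: "\<And>t. t \<in> {0..1} \<Longrightarrow> h' t \<in> W"
  shows "\<exists>x\<in>W. h 1 - h 0 = 2 *\<^sub>R x"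
proof -
  define p where "p = gaugeW W"
  have padd: "p (x + y) \<le> p x + p y" for x y unfolding p_def by (rule add)
  have pneg: "p (- x) = p x" for x unfolding p_def by (rule neg)
  have tri: "p (h s - h 0) \<le> p (h s - h t) + p (h t - h 0)" for s t
    using padd[of "h s - h t" "h t - h 0"] by simp
  define \<psi> where "\<psi> s = p (h s - h 0) - s" for s
  have contp: "((\<lambda>s. p (h s - h 0)) \<longlongrightarrow> p (h t - h 0)) (at t)" if t: "t \<in> {0..1}" for t
    unfolding tendsto_iff
  proof (intro allI impI)
    fix e :: real assume e: "e > 0"
    have "((\<lambda>s. inverse e *\<^sub>R (h s - h t)) \<longlongrightarrow> inverse e *\<^sub>R (h t - h t)) (at t)"
      by (rule tvs_scaleR[OF tv tendsto_const tvs_diff[OF tv cont_of_deriv[OF d[OF t]] tendsto_const]])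
    then have "eventually (\<lambda>s. inverse e *\<^sub>R (h s - h t) \<in> W) (at t)"
      using op z by (simp add: tendsto_def)
    then show "eventually (\<lambda>s. dist (p (h s - h 0)) (p (h t - h 0)) < e) (at t)"
    proof (rule eventually_mono)
      fix s assume "inverse e *\<^sub>R (h s - h t) \<in> W"
      then have 1: "p (h s - h t) < e" unfolding p_def using e by (intro mem_lt)
      then have 2: "p (h t - h s) < e" using pneg[of "h s - h t"] by simp
      show "dist (p (h s - h 0)) (p (h t - h 0)) < e"
        using tri[of s t] tri[of t s] 1 2 by (simp add: dist_real_def abs_less_iff)
    qed
  qed
  have cont: "continuous_on {0..1} \<psi>"
    unfolding \<psi>_def
    by (intro continuous_at_imp_continuous_on ballI) 
       (simp add: isCont_def, intro tendsto_diff contp tendsto_ident_at, simp)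
  have right: "eventually (\<lambda>s. \<psi> s \<le> \<psi> t) (at_right t)" if t: "t \<in> {0..<1}" for t
  proof -
    have t1: "t \<in> {0..1}" using t by simp
    have "eventually (\<lambda>r. inverse r *\<^sub>R (h (t + r) - h t) \<in> W) (at 0)"
      using d[OF t1] op dW[OF t1] by (simp add: tendsto_def)
    then have "eventually (\<lambda>s. inverse (s - t) *\<^sub>R (h (t + (s - t)) - h t) \<in> W) (at t)"
      by (rule shift0_eventually)
    then have "eventually (\<lambda>s. inverse (s - t) *\<^sub>R (h (t + (s - t)) - h t) \<in> W) (at_right t)"
      by (rule filter_leD[OF at_right_le_at])
    moreover have "eventually (\<lambda>s. s > t) (at_right t)" by (simp add: eventually_at_right_less)
    ultimately have "eventually (\<lambda>s. inverse (s - t) *\<^sub>R (h (t + (s - t)) - h t) \<in> W \<and> s > t) (at_right t)"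
      by (rule eventually_conj)
    then show ?thesis
    proof (rule eventually_mono)
      fix s assume s: "inverse (s - t) *\<^sub>R (h (t + (s - t)) - h t) \<in> W \<and> s > t"
      have "p (h s - h t) < s - t" unfolding p_def using mem_lt[of "s - t" "h s - h t"] s by simp
      then show "\<psi> s \<le> \<psi> t" using tri[of s t] by (simp add: \<psi>_def)
    qed
  qed
  have "\<psi> 1 \<le> \<psi> 0" using real_right_mono[OF _ cont right] by simp
  moreover have "p (h 0 - h 0) < 1/2" unfolding p_def using z by (intro mem_lt) auto
  ultimately have "p (h 1 - h 0) < 2" by (simp add: \<psi>_def)
  then have "inverse 2 *\<^sub>R (h 1 - h 0) \<in> W" unfolding p_def by (intro lt_mem) auto
  moreover have "h 1 - h 0 = 2 *\<^sub>R (inverse 2 *\<^sub>R (h 1 - h 0))" by simp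
  ultimately show ?thesis by blast
qed

end

lemma at0_nontriv: "\<not> trivial_limit (at (0::real))" using at_neq_bot[of "0::real"] by (simp add: trivial_limit_def)

lemma dd_unique: "(diffquot f v \<xi> \<longlongrightarrow> l) (at 0) \<Longrightarrow> dd f v \<xi> = l"
  unfolding dd_def by (rule tendsto_Lim[OF at0_nontriv])

lemma C1_hasdd: "C1 U f \<Longrightarrow> v \<in> U \<Longrightarrow> (diffquot f v \<xi> \<longlongrightarrow> dd f v \<xi>) (at 0)"
  unfolding C1_def using dd_unique by metis

lemma C1_cont: "C1 U f \<Longrightarrow> continuous_on (U \<times> UNIV) (\<lambda>(v, \<xi>). dd f v \<xi>)"
  unfolding C1_def by blast

lemma hasdd_scale:
  fixes f :: "'e::real_vector \<Rightarrow> 'f::{real_vector,topological_space}"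
  assumes tv: "tvs TYPE('f)" and d: "(diffquot f v \<xi> \<longlongrightarrow> l) (at 0)"
  shows "(diffquot f v (c *\<^sub>R \<xi>) \<longlongrightarrow> c *\<^sub>R l) (at 0)"
proof (cases "c = 0")
  case True
  have "diffquot f v 0 = (\<lambda>s. 0)" by (simp add: diffquot_def fun_eq_iff)
  then show ?thesis using True by simp
next
  case False
  have fl: "filterlim (\<lambda>s::real. c * s) (at 0) (at 0)"
  proof (rule filterlim_atI)
    show "((\<lambda>s::real. c * s) \<longlongrightarrow> 0) (at 0)" by (auto intro!: tendsto_eq_intros)
    show "\<forall>\<^sub>F x in at 0. c * x \<noteq> 0" using at0_neq by (rule eventually_mono) (use False in simp)
  qed
  have "((\<lambda>s. diffquot f v \<xi> (c * s)) \<longlongrightarrow> l) (at 0)" by (rule filterlim_compose[OF d fl])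
  then have "((\<lambda>s. c *\<^sub>R diffquot f v \<xi> (c * s)) \<longlongrightarrow> c *\<^sub>R l) (at 0)"
    by (rule tvs_scaleR[OF tv tendsto_const])
  moreover have "diffquot f v (c *\<^sub>R \<xi>) = (\<lambda>s. c *\<^sub>R diffquot f v \<xi> (c * s))"
    using False by (simp add: diffquot_def mult.commute fun_eq_iff)
  ultimately show ?thesis by simp
qed

lemma dd_scale:
  fixes f :: "'e::{real_vector,topological_space} \<Rightarrow> 'f::{real_vector,t2_space}"
  assumes "tvs TYPE('f)" "C1 U f" "v \<in> U"
  shows "dd f v (c *\<^sub>R \<xi>) = c *\<^sub>R dd f v \<xi>"
  by (rule dd_unique[OF hasdd_scale[OF assms(1) C1_hasdd[OF assms(2,3)]]])

lemma eventually_nhds_tendsto: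
  "(f \<longlongrightarrow> l) F \<Longrightarrow> eventually P (nhds l) \<Longrightarrow> eventually (\<lambda>i. P (f i)) F"
  unfolding filterlim_def le_filter_def eventually_filtermap by auto

lemma star_nbhd:
  fixes S :: "'e::{real_vector,topological_space} set"
  assumes tv: "tvs TYPE('e)" and lc: "lc TYPE('e)" and S: "open S" "x0 \<in> S"
  shows "\<exists>V. open V \<and> convex V \<and> 0 \<in> V \<and> (\<forall>z1\<in>V. \<forall>z2\<in>V. x0 + (z1 + z2) \<in> S)"
proof -
  have c: "continuous_on UNIV (\<lambda>q::'e\<times>'e. x0 + (fst q + snd q))"
  proof (rule tvs_contI)
    fix q :: "'e\<times>'e"
    have "((\<lambda>p::'e\<times>'e. fst p + snd p) \<longlongrightarrow> fst q + snd q) (at q)"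
      by (rule tvs_add[OF tv tendsto_fst[OF tendsto_ident_at] tendsto_snd[OF tendsto_ident_at]])
    then show "((\<lambda>q::'e\<times>'e. x0 + (fst q + snd q)) \<longlongrightarrow> x0 + (fst q + snd q)) (at q)"
      by (rule tvs_add[OF tv tendsto_const])
  qed
  have "open ((\<lambda>q::'e\<times>'e. x0 + (fst q + snd q)) -` S)" by (rule open_vimage_UNIV[OF c S(1)])
  moreover have "(0,0) \<in> (\<lambda>q::'e\<times>'e. x0 + (fst q + snd q)) -` S" using S by simp
  ultimately obtain A B where AB: "open A" "open B" "(0,0) \<in> A \<times> B" "A \<times> B \<subseteq> (\<lambda>q::'e\<times>'e. x0 + (fst q + snd q)) -` S"
    by (rule open_prod_elim)
  obtain V where V: "open V" "convex V" "0 \<in> V" "V \<subseteq> A \<inter> B"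
    using lc AB unfolding lc_def by (meson IntI mem_Sigma_iff open_Int)
  have "\<forall>z1\<in>V. \<forall>z2\<in>V. x0 + (z1 + z2) \<in> S"
  proof (intro ballI)
    fix z1 z2 assume "z1 \<in> V" "z2 \<in> V"
    then have "(z1, z2) \<in> A \<times> B" using V by auto
    then show "x0 + (z1 + z2) \<in> S" using AB(4) by auto
  qed
  then show ?thesis using V by blast
qed

lemma convex_seg: "convex V \<Longrightarrow> 0 \<in> V \<Longrightarrow> m \<in> V \<Longrightarrow> 0 \<le> (\<tau>::real) \<Longrightarrow> \<tau> \<le> 1 \<Longrightarrow> \<tau> *\<^sub>R m \<in> V"
  using convexD_alt[of V 0 m \<tau>] by simp

lemma core:
  fixes \<Phi> :: "'e::{real_vector,t2_space} \<Rightarrow> 'f::{real_vector,t2_space}"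
    and a k :: "'i \<Rightarrow> 'e" and \<sigma> :: "'i \<Rightarrow> real"
  assumes tvE: "tvs TYPE('e)" and lcE: "lc TYPE('e)" and tvF: "tvs TYPE('f)" and lcF: "lc TYPE('f)"
    and U: "open U" and C: "C1 U \<Phi>" and x0: "x0 \<in> U"
    and a: "(a \<longlongrightarrow> x0) F" and k: "(k \<longlongrightarrow> k0) F" and \<sigma>: "(\<sigma> \<longlongrightarrow> 0) F"
    and \<sigma>ne: "eventually (\<lambda>i. \<sigma> i \<noteq> 0) F"
  shows "((\<lambda>i. inverse (\<sigma> i) *\<^sub>R (\<Phi> (a i + \<sigma> i *\<^sub>R k i) - \<Phi> (a i))) \<longlongrightarrow> dd \<Phi> x0 k0) F"
proof (rule topological_tendstoI)
  fix Z assume Z: "open Z" "dd \<Phi> x0 k0 \<in> Z"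
  define l where "l = dd \<Phi> x0 k0"
  obtain W where W: "open W" "convex W" "0 \<in> W" "\<forall>x\<in>W. - x \<in> W" "\<forall>x\<in>W. l + 2 *\<^sub>R x \<in> Z"
    using nbhd_W[OF tvF lcF Z, of 2] unfolding l_def by blast
  interpret gw W using tvF W by unfold_locales auto
  have "continuous_on (U \<times> UNIV) (\<lambda>(v, \<xi>). dd \<Phi> v \<xi>)" by (rule C1_cont[OF C])
  then have "isCont (\<lambda>(v, \<xi>). dd \<Phi> v \<xi>) (x0, k0)"
    using U x0 by (simp add: continuous_on_eq_continuous_at open_Times)
  then have "((\<lambda>(v, \<xi>). dd \<Phi> v \<xi>) \<longlongrightarrow> l) (nhds (x0, k0))"
    unfolding l_def using tendsto_at_iff_tendsto_nhds[of "\<lambda>(v, \<xi>). dd \<Phi> v \<xi>" "(x0, k0)"] by (simp add: isCont_def)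
  then have "((\<lambda>q. (\<lambda>(v, \<xi>). dd \<Phi> v \<xi>) q - l) \<longlongrightarrow> l - l) (nhds (x0, k0))"
    by (rule tvs_diff[OF tvF _ tendsto_const])
  then have "eventually (\<lambda>q. (\<lambda>(v, \<xi>). dd \<Phi> v \<xi>) q - l \<in> W) (nhds (x0, k0))"
    using op z by (simp add: tendsto_def)
  moreover have "eventually (\<lambda>q. fst q \<in> U) (nhds (x0, k0))"
  proof -
    have "eventually (\<lambda>q. q \<in> U \<times> UNIV) (nhds (x0, k0))"
      using U x0 by (intro eventually_nhds_in_open) (auto simp: open_Times)
    then show ?thesis by (rule eventually_mono) auto
  qed
  ultimately have "eventually (\<lambda>q. fst q \<in> U \<and> (\<lambda>(v, \<xi>). dd \<Phi> v \<xi>) q - l \<in> W) (nhds x0 \<times>\<^sub>F nhds k0)"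
    unfolding nhds_prod[symmetric] by (simp add: eventually_conj_iff)
  then obtain P1 P2 where P: "eventually P1 (nhds x0)" "eventually P2 (nhds k0)"
      "\<And>x y. P1 x \<Longrightarrow> P2 y \<Longrightarrow> x \<in> U \<and> dd \<Phi> x y - l \<in> W"
    unfolding eventually_prod_filter by auto
  obtain S where S: "open S" "x0 \<in> S" "\<And>x. x \<in> S \<Longrightarrow> P1 x" using P(1) unfolding eventually_nhds by blast
  obtain V where V: "open V" "convex V" "0 \<in> V" "\<And>z1 z2. z1 \<in> V \<Longrightarrow> z2 \<in> V \<Longrightarrow> x0 + (z1 + z2) \<in> S"
    using star_nbhd[OF tvE lcE S(1,2)] by blast
  have e1: "eventually (\<lambda>i. a i - x0 \<in> V) F"
  proof -
    have "((\<lambda>i. a i - x0) \<longlongrightarrow> x0 - x0) F" by (rule tvs_diff[OF tvE a tendsto_const])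
    then show ?thesis using V by (simp add: tendsto_def)
  qed
  have e2: "eventually (\<lambda>i. \<sigma> i *\<^sub>R k i \<in> V) F"
  proof -
    have "((\<lambda>i. \<sigma> i *\<^sub>R k i) \<longlongrightarrow> 0 *\<^sub>R k0) F" by (rule tvs_scaleR[OF tvE \<sigma> k])
    then show ?thesis using V by (simp add: tendsto_def)
  qed
  have e3: "eventually (\<lambda>i. P2 (k i)) F" by (rule eventually_nhds_tendsto[OF k P(2)])
  show "eventually (\<lambda>i. inverse (\<sigma> i) *\<^sub>R (\<Phi> (a i + \<sigma> i *\<^sub>R k i) - \<Phi> (a i)) \<in> Z) F"
    using eventually_conj[OF e1 eventually_conj[OF e2 eventually_conj[OF e3 \<sigma>ne]]]
  proof (rule eventually_mono)
    fix i assume i: "a i - x0 \<in> V \<and> \<sigma> i *\<^sub>R k i \<in> V \<and> P2 (k i) \<and> \<sigma> i \<noteq> 0"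
    define b where "b = a i"
    define m where "m = \<sigma> i *\<^sub>R k i"
    define s where "s = \<sigma> i"
    have seg: "b + t *\<^sub>R m \<in> U \<and> dd \<Phi> (b + t *\<^sub>R m) (k i) - l \<in> W" if t: "t \<in> {0..1}" for t
    proof -
      have "t *\<^sub>R m \<in> V" using convex_seg[OF V(2,3), of m t] i t unfolding m_def by simp
      then have "x0 + ((b - x0) + t *\<^sub>R m) \<in> S" using V(4)[of "b - x0" "t *\<^sub>R m"] i unfolding b_def by blast
      then have "P1 (b + t *\<^sub>R m)" using S(3) by (simp add: algebra_simps)
      then show ?thesis using P(3) i by blast
    qed
    define h where "h t = inverse s *\<^sub>R \<Phi> (b + t *\<^sub>R m) - t *\<^sub>R l" for t
    define h' where "h' t = dd \<Phi> (b + t *\<^sub>R m) (k i) - l" for t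
    have hd: "((\<lambda>r. inverse r *\<^sub>R (h (t + r) - h t)) \<longlongrightarrow> h' t) (at 0)" if t: "t \<in> {0..1}" for t
    proof -
      have bU: "b + t *\<^sub>R m \<in> U" using seg[OF t] by blast
      have "(diffquot \<Phi> (b + t *\<^sub>R m) m \<longlongrightarrow> dd \<Phi> (b + t *\<^sub>R m) m) (at 0)"
        by (rule C1_hasdd[OF C bU])
      moreover have "dd \<Phi> (b + t *\<^sub>R m) m = s *\<^sub>R dd \<Phi> (b + t *\<^sub>R m) (k i)"
        using dd_scale[OF tvF C bU, of "\<sigma> i" "k i"] by (simp add: m_def s_def)
      ultimately have "((\<lambda>r. inverse s *\<^sub>R diffquot \<Phi> (b + t *\<^sub>R m) m r) \<longlongrightarrow> inverse s *\<^sub>R (s *\<^sub>R dd \<Phi> (b + t *\<^sub>R m) (k i))) (at 0)"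
        by (intro tvs_scaleR[OF tvF tendsto_const]) (simp only:)
      then have "((\<lambda>r. inverse s *\<^sub>R diffquot \<Phi> (b + t *\<^sub>R m) m r - l) \<longlongrightarrow> inverse s *\<^sub>R (s *\<^sub>R dd \<Phi> (b + t *\<^sub>R m) (k i)) - l) (at 0)"
        by (rule tvs_diff[OF tvF _ tendsto_const])
      moreover have "inverse s *\<^sub>R (s *\<^sub>R dd \<Phi> (b + t *\<^sub>R m) (k i)) - l = h' t"
        using i by (simp add: h'_def s_def)
      moreover have "eventually (\<lambda>r. inverse s *\<^sub>R diffquot \<Phi> (b + t *\<^sub>R m) m r - l = inverse r *\<^sub>R (h (t + r) - h t)) (at 0)"
        using at0_neq
      proof (rule eventually_mono)
        fix r :: real assume r: "r \<noteq> 0"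
        have "inverse r *\<^sub>R (h (t + r) - h t) = inverse r *\<^sub>R (inverse s *\<^sub>R (\<Phi> (b + t *\<^sub>R m + r *\<^sub>R m) - \<Phi> (b + t *\<^sub>R m)) - r *\<^sub>R l)"
          by (simp add: h_def algebra_simps scaleR_add_left)
        also have "\<dots> = inverse s *\<^sub>R (inverse r *\<^sub>R (\<Phi> (b + t *\<^sub>R m + r *\<^sub>R m) - \<Phi> (b + t *\<^sub>R m))) - l"
          using r by (simp add: scaleR_diff_right algebra_simps)
        finally show "inverse s *\<^sub>R diffquot \<Phi> (b + t *\<^sub>R m) m r - l = inverse r *\<^sub>R (h (t + r) - h t)"
          by (simp add: diffquot_def)
      qed
      ultimately show ?thesis using Lim_transform_eventually by fastforce
    qed
    obtain x where x: "x \<in> W" "h 1 - h 0 = 2 *\<^sub>R x"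
      using mvt[of h h'] hd seg by (auto simp: h'_def)
    have "h 1 - h 0 = inverse (\<sigma> i) *\<^sub>R (\<Phi> (a i + \<sigma> i *\<^sub>R k i) - \<Phi> (a i)) - l"
      by (simp add: h_def b_def m_def s_def scaleR_diff_right)
    then have "inverse (\<sigma> i) *\<^sub>R (\<Phi> (a i + \<sigma> i *\<^sub>R k i) - \<Phi> (a i)) = l + 2 *\<^sub>R x"
      using x by (simp add: algebra_simps)
    then show "inverse (\<sigma> i) *\<^sub>R (\<Phi> (a i + \<sigma> i *\<^sub>R k i) - \<Phi> (a i)) \<in> Z" using W(5) x(1) by simp
  qed
qed

lemma neq_within: "eventually (\<lambda>s. s \<noteq> t) (at t within S)"
  by (simp add: eventually_at_filter)

lemma chain_curve:
  fixes \<Phi> :: "'e::{real_vector,t2_space} \<Rightarrow> 'f::{real_vector,t2_space}" and c :: "real \<Rightarrow> 'e"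
  assumes tvE: "tvs TYPE('e)" and lcE: "lc TYPE('e)" and tvF: "tvs TYPE('f)" and lcF: "lc TYPE('f)"
    and U: "open U" and C: "C1 U \<Phi>" and ct: "c t \<in> U"
    and d: "((\<lambda>s. inverse (s - t) *\<^sub>R (c s - c t)) \<longlongrightarrow> c') (at t within S)"
  shows "((\<lambda>s. inverse (s - t) *\<^sub>R (\<Phi> (c s) - \<Phi> (c t))) \<longlongrightarrow> dd \<Phi> (c t) c') (at t within S)"
proof -
  have s0: "((\<lambda>s. s - t) \<longlongrightarrow> 0) (at t within S)"
    using tendsto_diff[OF tendsto_ident_at[of t S] tendsto_const[of t]] by simp
  have ne: "eventually (\<lambda>s. s - t \<noteq> 0) (at t within S)" using neq_within by (rule eventually_mono) simp
  have "((\<lambda>s. inverse (s - t) *\<^sub>R (\<Phi> (c t + (s - t) *\<^sub>R (inverse (s - t) *\<^sub>R (c s - c t))) - \<Phi> (c t)))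
      \<longlongrightarrow> dd \<Phi> (c t) c') (at t within S)"
    by (rule core[OF tvE lcE tvF lcF U C ct tendsto_const d s0 ne])
  moreover have "eventually (\<lambda>s. inverse (s - t) *\<^sub>R (\<Phi> (c t + (s - t) *\<^sub>R (inverse (s - t) *\<^sub>R (c s - c t))) - \<Phi> (c t))
      = inverse (s - t) *\<^sub>R (\<Phi> (c s) - \<Phi> (c t))) (at t within S)"
    using ne by (rule eventually_mono) simp
  ultimately show ?thesis by (rule Lim_transform_eventually)
qed

lemma chain_dd:
  fixes \<Phi> :: "'e::{real_vector,t2_space} \<Rightarrow> 'f::{real_vector,t2_space}" and \<psi> :: "'g::real_vector \<Rightarrow> 'e"
  assumes tvE: "tvs TYPE('e)" and lcE: "lc TYPE('e)" and tvF: "tvs TYPE('f)" and lcF: "lc TYPE('f)"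
    and U: "open U" and C: "C1 U \<Phi>" and pw: "\<psi> w \<in> U"
    and d: "(diffquot \<psi> w \<xi> \<longlongrightarrow> l) (at 0)"
  shows "(diffquot (\<lambda>u. \<Phi> (\<psi> u)) w \<xi> \<longlongrightarrow> dd \<Phi> (\<psi> w) l) (at 0)"
proof -
  have "((\<lambda>r. inverse (r - 0) *\<^sub>R ((\<lambda>r. \<psi> (w + r *\<^sub>R \<xi>)) r - (\<lambda>r. \<psi> (w + r *\<^sub>R \<xi>)) 0)) \<longlongrightarrow> l) (at 0 within UNIV)"
    using d by (simp add: diffquot_def[abs_def])
  from chain_curve[OF tvE lcE tvF lcF U C _ this] pw
  show ?thesis by (simp add: diffquot_def[abs_def])
qed

lemma dd_add:
  fixes \<Phi> :: "'e::{real_vector,t2_space} \<Rightarrow> 'f::{real_vector,t2_space}"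
  assumes tvE: "tvs TYPE('e)" and lcE: "lc TYPE('e)" and tvF: "tvs TYPE('f)" and lcF: "lc TYPE('f)"
    and U: "open U" and C: "C1 U \<Phi>" and v: "v \<in> U"
  shows "dd \<Phi> v (\<xi> + \<eta>) = dd \<Phi> v \<xi> + dd \<Phi> v \<eta>"
proof (rule dd_unique)
  have a: "((\<lambda>r::real. v + r *\<^sub>R \<xi>) \<longlongrightarrow> v + 0 *\<^sub>R \<xi>) (at 0)"
    by (rule tvs_add[OF tvE tendsto_const tvs_scaleR[OF tvE tendsto_ident_at tendsto_const]])
  have 1: "((\<lambda>r. inverse r *\<^sub>R (\<Phi> (v + r *\<^sub>R \<xi> + r *\<^sub>R \<eta>) - \<Phi> (v + r *\<^sub>R \<xi>))) \<longlongrightarrow> dd \<Phi> v \<eta>) (at 0)"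
    using core[OF tvE lcE tvF lcF U C v _ tendsto_const tendsto_ident_at at0_neq] a by simp
  have 2: "(diffquot \<Phi> v \<xi> \<longlongrightarrow> dd \<Phi> v \<xi>) (at 0)" by (rule C1_hasdd[OF C v])
  have "((\<lambda>r. diffquot \<Phi> v \<xi> r + inverse r *\<^sub>R (\<Phi> (v + r *\<^sub>R \<xi> + r *\<^sub>R \<eta>) - \<Phi> (v + r *\<^sub>R \<xi>)))
       \<longlongrightarrow> dd \<Phi> v \<xi> + dd \<Phi> v \<eta>) (at 0)" by (rule tvs_add[OF tvF 2 1])
  moreover have "(\<lambda>r. diffquot \<Phi> v \<xi> r + inverse r *\<^sub>R (\<Phi> (v + r *\<^sub>R \<xi> + r *\<^sub>R \<eta>) - \<Phi> (v + r *\<^sub>R \<xi>)))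
      = diffquot \<Phi> v (\<xi> + \<eta>)"
    by (simp add: fun_eq_iff diffquot_def scaleR_add_right add.assoc scaleR_diff_right)
  ultimately show "(diffquot \<Phi> v (\<xi> + \<eta>) \<longlongrightarrow> dd \<Phi> v \<xi> + dd \<Phi> v \<eta>) (at 0)" by simp
qed

lemma curve_cont:
  fixes c :: "real \<Rightarrow> 'e::{real_vector,topological_space}"
  assumes tvE: "tvs TYPE('e)" and d: "((\<lambda>s. inverse (s - t) *\<^sub>R (c s - c t)) \<longlongrightarrow> c') (at t within S)"
  shows "(c \<longlongrightarrow> c t) (at t within S)"
proof -
  have s0: "((\<lambda>s. s - t) \<longlongrightarrow> 0) (at t within S)"
    using tendsto_diff[OF tendsto_ident_at[of t S] tendsto_const[of t]] by simp
  have "((\<lambda>s. (s - t) *\<^sub>R (inverse (s - t) *\<^sub>R (c s - c t))) \<longlongrightarrow> 0 *\<^sub>R c') (at t within S)"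
    by (rule tvs_scaleR[OF tvE s0 d])
  moreover have "eventually (\<lambda>s. (s - t) *\<^sub>R (inverse (s - t) *\<^sub>R (c s - c t)) = c s - c t) (at t within S)"
    using neq_within by (rule eventually_mono) simp
  ultimately have "((\<lambda>s. c s - c t) \<longlongrightarrow> 0 *\<^sub>R c') (at t within S)" by (rule Lim_transform_eventually)
  then have "((\<lambda>s. (c s - c t) + c t) \<longlongrightarrow> 0 *\<^sub>R c' + c t) (at t within S)"
    by (rule tvs_add[OF tvE _ tendsto_const])
  then show ?thesis by (simp only: diff_add_cancel scale_zero_left add_0_left)
qed

lemma prod_fst_ev:
  assumes "B \<noteq> bot" "eventually P A" shows "eventually (\<lambda>i. P (fst i)) (A \<times>\<^sub>F B)"
  using eventually_prod1[OF assms(1), of P A] assms(2) by (simp add: case_prod_unfold)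

lemma prod_fst_tendsto:
  assumes "B \<noteq> bot" "(f \<longlongrightarrow> l) A" shows "((\<lambda>i. f (fst i)) \<longlongrightarrow> l) (A \<times>\<^sub>F B)"
  using assms unfolding filterlim_iff by (auto intro: prod_fst_ev)

lemma prod_unif:
  assumes "eventually P (A \<times>\<^sub>F principal S)" shows "eventually (\<lambda>s. \<forall>\<tau>\<in>S. P (s, \<tau>)) A"
  using assms unfolding eventually_prod_filter eventually_principal by (auto elim: eventually_mono)

lemma slice_dq1: "diffquot (\<lambda>u. \<Phi> (u, e)) u \<xi> = diffquot \<Phi> (u, e) (\<xi>, 0)"
  by (simp add: fun_eq_iff diffquot_def)

lemma slice_dq2: "diffquot (\<lambda>e. \<Phi> (u, e)) e \<zeta> = diffquot \<Phi> (u, e) (0, \<zeta>)"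
  by (simp add: fun_eq_iff diffquot_def)

lemma slice_dd1: "dd (\<lambda>u. \<Phi> (u, e)) u \<xi> = dd \<Phi> (u, e) (\<xi>, 0)"
  by (simp add: dd_def slice_dq1)

lemma slice_C1:
  fixes \<Phi> :: "'e::{real_vector,topological_space} \<times> 'g::{real_vector,topological_space} \<Rightarrow> 'f::{real_vector,t2_space}"
  assumes "C1 (U \<times> UNIV) \<Phi>" shows "C1 U (\<lambda>u. \<Phi> (u, e))"
  unfolding C1_def
proof (intro conjI ballI allI)
  fix v \<xi> assume "v \<in> U"
  then show "\<exists>l. (diffquot (\<lambda>u. \<Phi> (u, e)) v \<xi> \<longlongrightarrow> l) (at 0)"
    using assms unfolding C1_def slice_dq1 by auto
next
  have "continuous_on (U \<times> UNIV) (\<lambda>q. (\<lambda>(v, \<xi>). dd \<Phi> v \<xi>) ((fst q, e), (snd q, 0)))"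
    by (rule continuous_on_compose2[OF C1_cont[OF assms]]) (auto intro!: continuous_intros)
  then show "continuous_on (U \<times> UNIV) (\<lambda>(v, \<xi>). dd (\<lambda>u. \<Phi> (u, e)) v \<xi>)"
    by (simp add: slice_dd1 case_prod_beta)
qed

lemma schwarz_lim:
  fixes F :: "'e::{real_vector,t2_space} \<Rightarrow> 'f::{real_vector,t2_space}"
  assumes tvE: "tvs TYPE('e)" and lcE: "lc TYPE('e)" and tvF: "tvs TYPE('f)" and lcF: "lc TYPE('f)"
    and U: "open U" and C: "C1 U F" and C2: "C1 (U \<times> UNIV) (\<lambda>(v, \<xi>). dd F v \<xi>)" and w: "w \<in> U"
  shows "((\<lambda>s. inverse (s * s) *\<^sub>R (F (w + s *\<^sub>R \<eta> + s *\<^sub>R \<xi>) - F (w + s *\<^sub>R \<eta>) - F (w + s *\<^sub>R \<xi>) + F w))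
          \<longlongrightarrow> dd (\<lambda>(v, \<xi>). dd F v \<xi>) (w, \<eta>) (\<xi>, 0)) (at 0)"
proof (rule topological_tendstoI)
  fix Z assume Z: "open Z" "dd (\<lambda>(v, \<xi>). dd F v \<xi>) (w, \<eta>) (\<xi>, 0) \<in> Z"
  define \<Psi> where "\<Psi> u = dd F u \<eta>" for u
  have CP: "C1 U \<Psi>" using slice_C1[OF C2, of \<eta>] unfolding \<Psi>_def by simp
  define D where "D = dd \<Psi> w \<xi>"
  have D: "D = dd (\<lambda>(v, \<xi>). dd F v \<xi>) (w, \<eta>) (\<xi>, 0)"
    unfolding D_def \<Psi>_def using slice_dd1[of "\<lambda>(v, \<xi>). dd F v \<xi>" \<eta> w \<xi>] by simp
  obtain W where W: "open W" "convex W" "0 \<in> W" "\<forall>x\<in>W. - x \<in> W" "\<forall>x\<in>W. D + 2 *\<^sub>R x \<in> Z"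
    using nbhd_W[OF tvF lcF Z(1), of D 2] Z(2) D by blast
  interpret gw W using tvF W by unfold_locales auto
  define G where "G = at (0::real) \<times>\<^sub>F principal {0..1::real}"
  have Gne: "principal {0..1::real} \<noteq> bot" by (simp add: principal_eq_bot_iff)
  define a where "a i = w + (snd i * fst i) *\<^sub>R \<eta>" for i :: "real \<times> real"
  have ts: "((\<lambda>i::real\<times>real. snd i * fst i) \<longlongrightarrow> 0) G"
    unfolding tendsto_iff G_def
  proof (intro allI impI)
    fix e :: real assume e: "e > 0"
    have "eventually (\<lambda>s::real. dist s 0 < e) (at 0)" using e tendsto_ident_at[of "0::real" UNIV]
      unfolding tendsto_iff by blast
    show "eventually (\<lambda>i::real\<times>real. dist (snd i * fst i) 0 < e) (at 0 \<times>\<^sub>F principal {0..1})"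
      unfolding eventually_prod_filter
    proof (rule exI[of _ "\<lambda>s. dist s 0 < e"], rule exI[of _ "\<lambda>\<tau>. \<tau> \<in> {0..1}"], intro conjI allI impI)
      show "eventually (\<lambda>s::real. dist s 0 < e) (at 0)" by fact
      show "eventually (\<lambda>\<tau>::real. \<tau> \<in> {0..1}) (principal {0..1})" by (simp add: eventually_principal)
      fix x y :: real assume xy: "dist x 0 < e" "y \<in> {0..1}"
      have yx: "\<bar>y\<bar> * \<bar>x\<bar> \<le> \<bar>x\<bar>" using xy(2) by (intro mult_left_le_one_le) auto
      show "dist (snd (x, y) * fst (x, y)) 0 < e" using yx xy(1) by (simp add: abs_mult)
    qed
  qed
  have fs: "((\<lambda>i::real\<times>real. fst i) \<longlongrightarrow> 0) G"
    unfolding G_def by (rule prod_fst_tendsto[OF Gne tendsto_ident_at])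
  have fne: "eventually (\<lambda>i::real\<times>real. fst i \<noteq> 0) G"
    unfolding G_def by (rule prod_fst_ev[OF Gne at0_neq])
  have aw: "(a \<longlongrightarrow> w) G"
  proof -
    have "(a \<longlongrightarrow> w + 0 *\<^sub>R \<eta>) G" unfolding a_def
      by (rule tvs_add[OF tvE tendsto_const tvs_scaleR[OF tvE ts tendsto_const]])
    then show ?thesis by simp
  qed
  have a2w: "((\<lambda>i. a i + fst i *\<^sub>R \<xi>) \<longlongrightarrow> w) G"
  proof -
    have "((\<lambda>i. a i + fst i *\<^sub>R \<xi>) \<longlongrightarrow> w + 0 *\<^sub>R \<xi>) G"
      by (rule tvs_add[OF tvE aw tvs_scaleR[OF tvE fs tendsto_const]])
    then show ?thesis by simp
  qed
  have lim: "((\<lambda>i. inverse (fst i) *\<^sub>R (\<Psi> (a i + fst i *\<^sub>R \<xi>) - \<Psi> (a i))) \<longlongrightarrow> D) G"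
    unfolding D_def by (rule core[OF tvE lcE tvF lcF U CP w aw tendsto_const fs fne])
  have ev: "eventually (\<lambda>i. (inverse (fst i) *\<^sub>R (\<Psi> (a i + fst i *\<^sub>R \<xi>) - \<Psi> (a i))) - D \<in> W
       \<and> a i \<in> U \<and> a i + fst i *\<^sub>R \<xi> \<in> U) G"
  proof (intro eventually_conj)
    have "((\<lambda>i. (inverse (fst i) *\<^sub>R (\<Psi> (a i + fst i *\<^sub>R \<xi>) - \<Psi> (a i))) - D) \<longlongrightarrow> D - D) G"
      by (rule tvs_diff[OF tvF lim tendsto_const])
    then show "eventually (\<lambda>i. (inverse (fst i) *\<^sub>R (\<Psi> (a i + fst i *\<^sub>R \<xi>) - \<Psi> (a i))) - D \<in> W) G"
      using op z by (simp add: tendsto_def)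
    show "eventually (\<lambda>i. a i \<in> U) G" using aw U w by (simp add: tendsto_def)
    show "eventually (\<lambda>i. a i + fst i *\<^sub>R \<xi> \<in> U) G" using a2w U w by (simp add: tendsto_def)
  qed
  have ev2: "eventually (\<lambda>s. \<forall>\<tau>\<in>{0..1}. (inverse s *\<^sub>R (\<Psi> (a (s,\<tau>) + s *\<^sub>R \<xi>) - \<Psi> (a (s,\<tau>)))) - D \<in> W
       \<and> a (s,\<tau>) \<in> U \<and> a (s,\<tau>) + s *\<^sub>R \<xi> \<in> U) (at 0)"
    using prod_unif[OF ev[unfolded G_def]] by simp
  show "eventually (\<lambda>s. inverse (s * s) *\<^sub>R (F (w + s *\<^sub>R \<eta> + s *\<^sub>R \<xi>) - F (w + s *\<^sub>R \<eta>) - F (w + s *\<^sub>R \<xi>) + F w) \<in> Z) (at 0)"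
    using eventually_conj[OF ev2 at0_neq]
  proof (rule eventually_mono)
    fix s :: real
    assume sA: "(\<forall>\<tau>\<in>{0..1}. (inverse s *\<^sub>R (\<Psi> (a (s,\<tau>) + s *\<^sub>R \<xi>) - \<Psi> (a (s,\<tau>)))) - D \<in> W
       \<and> a (s,\<tau>) \<in> U \<and> a (s,\<tau>) + s *\<^sub>R \<xi> \<in> U) \<and> s \<noteq> 0"
    define h where "h \<tau> = inverse (s * s) *\<^sub>R (F (a (s,\<tau>) + s *\<^sub>R \<xi>) - F (a (s,\<tau>))) - \<tau> *\<^sub>R D" for \<tau>
    define h' where "h' \<tau> = (inverse s *\<^sub>R (\<Psi> (a (s,\<tau>) + s *\<^sub>R \<xi>) - \<Psi> (a (s,\<tau>)))) - D" for \<tau>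
    have hd: "((\<lambda>r. inverse r *\<^sub>R (h (\<tau> + r) - h \<tau>)) \<longlongrightarrow> h' \<tau>) (at 0)" if t: "\<tau> \<in> {0..1}" for \<tau>
    proof -
      define b where "b = a (s, \<tau>)"
      have bU: "b \<in> U" "b + s *\<^sub>R \<xi> \<in> U" using sA t by (auto simp: b_def)
      have l1: "(diffquot F (b + s *\<^sub>R \<xi>) (s *\<^sub>R \<eta>) \<longlongrightarrow> s *\<^sub>R \<Psi> (b + s *\<^sub>R \<xi>)) (at 0)"
        unfolding \<Psi>_def dd_scale[OF tvF C bU(2), symmetric] by (rule C1_hasdd[OF C bU(2)])
      have l2: "(diffquot F b (s *\<^sub>R \<eta>) \<longlongrightarrow> s *\<^sub>R \<Psi> b) (at 0)"
        unfolding \<Psi>_def dd_scale[OF tvF C bU(1), symmetric] by (rule C1_hasdd[OF C bU(1)])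
      have "((\<lambda>r. inverse (s * s) *\<^sub>R (diffquot F (b + s *\<^sub>R \<xi>) (s *\<^sub>R \<eta>) r - diffquot F b (s *\<^sub>R \<eta>) r) - D)
          \<longlongrightarrow> inverse (s * s) *\<^sub>R (s *\<^sub>R \<Psi> (b + s *\<^sub>R \<xi>) - s *\<^sub>R \<Psi> b) - D) (at 0)"
        by (rule tvs_diff[OF tvF tvs_scaleR[OF tvF tendsto_const tvs_diff[OF tvF l1 l2]] tendsto_const])
      moreover have "inverse (s * s) *\<^sub>R (s *\<^sub>R \<Psi> (b + s *\<^sub>R \<xi>) - s *\<^sub>R \<Psi> b) - D = h' \<tau>"
      proof -
        have ss: "inverse s * inverse s * s = inverse s" using sA by (simp add: field_simps)
        show ?thesis using sA by (simp add: h'_def b_def scaleR_diff_right ss)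
      qed
      moreover have "eventually (\<lambda>r. inverse (s * s) *\<^sub>R (diffquot F (b + s *\<^sub>R \<xi>) (s *\<^sub>R \<eta>) r - diffquot F b (s *\<^sub>R \<eta>) r) - D
          = inverse r *\<^sub>R (h (\<tau> + r) - h \<tau>)) (at 0)"
        using at0_neq
      proof (rule eventually_mono)
        fix r :: real assume r: "r \<noteq> 0"
        have e1: "a (s, \<tau> + r) = b + r *\<^sub>R (s *\<^sub>R \<eta>)" by (simp add: a_def b_def algebra_simps)
        have e2: "a (s, \<tau> + r) + s *\<^sub>R \<xi> = b + s *\<^sub>R \<xi> + r *\<^sub>R (s *\<^sub>R \<eta>)" by (simp add: e1 algebra_simps)
        have A: "F (a (s, \<tau> + r) + s *\<^sub>R \<xi>) = F (b + s *\<^sub>R \<xi> + r *\<^sub>R (s *\<^sub>R \<eta>))" by (simp only: e2)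
        have B: "F (a (s, \<tau> + r)) = F (b + r *\<^sub>R (s *\<^sub>R \<eta>))" by (simp only: e1)
        have H1: "h (\<tau> + r) = inverse (s * s) *\<^sub>R (F (b + s *\<^sub>R \<xi> + r *\<^sub>R (s *\<^sub>R \<eta>)) - F (b + r *\<^sub>R (s *\<^sub>R \<eta>))) - (\<tau> + r) *\<^sub>R D"
          by (simp only: h_def A B)
        have H2: "h \<tau> = inverse (s * s) *\<^sub>R (F (b + s *\<^sub>R \<xi>) - F b) - \<tau> *\<^sub>R D"
          by (simp only: h_def b_def)
        have HD: "h (\<tau> + r) - h \<tau> = inverse (s * s) *\<^sub>R ((F (b + s *\<^sub>R \<xi> + r *\<^sub>R (s *\<^sub>R \<eta>)) - F (b + s *\<^sub>R \<xi>))
              - (F (b + r *\<^sub>R (s *\<^sub>R \<eta>)) - F b)) - r *\<^sub>R D"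
          unfolding H1 H2 by (simp add: algebra_simps)
        then show "inverse (s * s) *\<^sub>R (diffquot F (b + s *\<^sub>R \<xi>) (s *\<^sub>R \<eta>) r - diffquot F b (s *\<^sub>R \<eta>) r) - D
          = inverse r *\<^sub>R (h (\<tau> + r) - h \<tau>)"
          unfolding HD using r by (simp add: diffquot_def algebra_simps)
      qed
      ultimately show ?thesis using Lim_transform_eventually by fastforce
    qed
    obtain x where x: "x \<in> W" "h 1 - h 0 = 2 *\<^sub>R x"
      using mvt[of h h'] hd sA by (auto simp: h'_def)
    define E where "E = inverse (s * s) *\<^sub>R (F (w + s *\<^sub>R \<eta> + s *\<^sub>R \<xi>) - F (w + s *\<^sub>R \<eta>) - F (w + s *\<^sub>R \<xi>) + F w)"
    have HH: "h 1 - h 0 = E - D"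
      by (simp add: h_def a_def E_def algebra_simps)
    have "E - D = 2 *\<^sub>R x" by (simp only: HH[symmetric] x(2))
    then have "E = D + 2 *\<^sub>R x" by (metis diff_eq_eq add.commute)
    then show "inverse (s * s) *\<^sub>R (F (w + s *\<^sub>R \<eta> + s *\<^sub>R \<xi>) - F (w + s *\<^sub>R \<eta>) - F (w + s *\<^sub>R \<xi>) + F w) \<in> Z"
      using x W(5) unfolding E_def by simp
  qed
qed

lemma schwarz:
  fixes F :: "'e::{real_vector,t2_space} \<Rightarrow> 'f::{real_vector,t2_space}"
  assumes tvE: "tvs TYPE('e)" and lcE: "lc TYPE('e)" and tvF: "tvs TYPE('f)" and lcF: "lc TYPE('f)"
    and U: "open U" and C: "C1 U F" and C2: "C1 (U \<times> UNIV) (\<lambda>(v, \<xi>). dd F v \<xi>)" and w: "w \<in> U"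
  shows "dd (\<lambda>(v, \<xi>). dd F v \<xi>) (w, \<eta>) (\<xi>, 0) = dd (\<lambda>(v, \<xi>). dd F v \<xi>) (w, \<xi>) (\<eta>, 0)"
proof -
  note L1 = schwarz_lim[OF assms, of \<xi> \<eta>]
  note L2 = schwarz_lim[OF assms, of \<eta> \<xi>]
  have eq: "(\<lambda>s. inverse (s * s) *\<^sub>R (F (w + s *\<^sub>R \<xi> + s *\<^sub>R \<eta>) - F (w + s *\<^sub>R \<xi>) - F (w + s *\<^sub>R \<eta>) + F w))
      = (\<lambda>s. inverse (s * s) *\<^sub>R (F (w + s *\<^sub>R \<eta> + s *\<^sub>R \<xi>) - F (w + s *\<^sub>R \<eta>) - F (w + s *\<^sub>R \<xi>) + F w))"
    by (simp add: fun_eq_iff algebra_simps)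
  have L1': "((\<lambda>s. inverse (s * s) *\<^sub>R (F (w + s *\<^sub>R \<eta> + s *\<^sub>R \<xi>) - F (w + s *\<^sub>R \<eta>) - F (w + s *\<^sub>R \<xi>) + F w))
     \<longlongrightarrow> dd (\<lambda>(v, \<xi>). dd F v \<xi>) (w, \<xi>) (\<eta>, 0)) (at 0)"
    using L1 unfolding eq .
  show ?thesis by (rule tendsto_unique[OF at_neq_bot L2 L1'])
qed

lemma dd_minus:
  fixes F :: "'e::{real_vector,t2_space} \<Rightarrow> 'f::{real_vector,t2_space}"
  assumes "tvs TYPE('f)" "C1 U F" "v \<in> U"
  shows "dd F v (- \<xi>) = - dd F v \<xi>"
  using dd_scale[OF assms, of "-1" \<xi>] by simp

lemma at0_open_ev:
  fixes v :: "'e::{real_vector,topological_space}"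
  assumes tv: "tvs TYPE('e)" and U: "open U" "v \<in> U"
  shows "eventually (\<lambda>r::real. v + r *\<^sub>R x \<in> U) (at 0)"
proof -
  have "((\<lambda>r::real. v + r *\<^sub>R x) \<longlongrightarrow> v + 0 *\<^sub>R x) (at 0)"
    by (rule tvs_add[OF tv tendsto_const tvs_scaleR[OF tv tendsto_ident_at tendsto_const]])
  then show ?thesis using U by (simp add: tendsto_def)
qed

lemma dd_local:
  fixes f g :: "'e::{real_vector,topological_space} \<Rightarrow> 'f::{real_vector,t2_space}"
  assumes tv: "tvs TYPE('e)" and U: "open U" "v \<in> U" and eq: "\<And>u. u \<in> U \<Longrightarrow> f u = g u"
  shows "diffquot f v \<xi> = diffquot g v \<xi> \<or> True" and
    "eventually (\<lambda>r. diffquot f v \<xi> r = diffquot g v \<xi> r) (at 0)"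
proof -
  show "diffquot f v \<xi> = diffquot g v \<xi> \<or> True" by simp
  show "eventually (\<lambda>r. diffquot f v \<xi> r = diffquot g v \<xi> r) (at 0)"
    using at0_open_ev[OF tv U, of \<xi>] by (rule eventually_mono) (simp add: diffquot_def eq U)
qed

lemma surj_dF:
  fixes F :: "'b::{real_vector,t2_space} \<Rightarrow> 'a::{real_vector,t2_space}"
  assumes tva: "tvs TYPE('a)" and lca: "lc TYPE('a)" and tvb: "tvs TYPE('b)" and lcb: "lc TYPE('b)"
    and U: "open U" and C: "C1 U F" and inj: "inj_on F U" and oF: "open (F ` U)"
    and Ci: "C1 (F ` U) (the_inv_into U F)" and w: "w \<in> U"
  shows "\<exists>\<zeta>. dd F w \<zeta> = x"
proof -
  define G where "G = the_inv_into U F"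
  define v where "v = F w"
  have v: "v \<in> F ` U" using w by (simp add: v_def)
  have Gv: "G v = w" using inj w by (simp add: G_def v_def the_inv_into_f_f)
  have 1: "(diffquot (\<lambda>u. F (G u)) v x \<longlongrightarrow> dd F (G v) (dd G v x)) (at 0)"
    by (rule chain_dd[OF tvb lcb tva lca U C _ C1_hasdd[OF Ci[folded G_def] v]]) (simp add: Gv w)
  have ev: "eventually (\<lambda>r. diffquot (\<lambda>u. F (G u)) v x r = x) (at 0)"
    using eventually_conj[OF at0_open_ev[OF tva oF v, of x] at0_neq]
  proof (rule eventually_mono)
    fix r :: real assume r: "v + r *\<^sub>R x \<in> F ` U \<and> r \<noteq> 0"
    then have "F (G (v + r *\<^sub>R x)) = v + r *\<^sub>R x" unfolding G_def by (intro f_the_inv_into_f inj) auto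
    moreover have "F (G v) = v" unfolding G_def using v inj by (intro f_the_inv_into_f) auto
    ultimately show "diffquot (\<lambda>u. F (G u)) v x r = x" using r by (simp add: diffquot_def)
  qed
  have "(diffquot (\<lambda>u. F (G u)) v x \<longlongrightarrow> x) (at 0)" using tendsto_cong[OF ev] by simp
  with 1 have "dd F (G v) (dd G v x) = x" by (rule tendsto_unique[OF at_neq_bot])
  then show ?thesis unfolding Gv by blast
qed

lemma dd_const: "dd (\<lambda>_. c::'f::{real_vector,t2_space}) v \<xi> = 0"
  by (rule dd_unique) (simp add: diffquot_def[abs_def])

lemma C1_const:
  fixes U :: "'e::{real_vector,topological_space} set"
  shows "C1 U (\<lambda>_. c::'f::{real_vector,t2_space})"
proof -
  have dq: "diffquot (\<lambda>_. c) v \<xi> = (\<lambda>_. 0)" for v \<xi> :: 'e by (simp add: diffquot_def fun_eq_iff)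
  have d: "dd (\<lambda>_. c) v \<xi> = 0" for v \<xi> :: 'e by (rule dd_unique) (simp add: dq)
  have "(\<lambda>(v::'e, \<xi>::'e). dd (\<lambda>_. c) v \<xi>) = (\<lambda>_. 0)" by (simp add: fun_eq_iff dd_const)
  then show ?thesis unfolding C1_def by (auto simp: dq)
qed

lemma koszul:
  fixes g :: "'a::{real_vector,t2_space} \<Rightarrow> 'a \<Rightarrow> 'a \<Rightarrow> real"
  assumes LC: "levi_civita \<Omega> g A" and v: "v \<in> \<Omega>"
  shows "2 * g v (A v \<xi> \<eta>) \<zeta> = dd (\<lambda>u. g u \<eta> \<zeta>) v \<xi> + dd (\<lambda>u. g u \<xi> \<zeta>) v \<eta> - dd (\<lambda>u. g u \<xi> \<eta>) v \<zeta>"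
proof -
  have rm: "riemannian_metric \<Omega> g" and sA: "\<And>\<xi> \<eta>. A v \<xi> \<eta> = A v \<eta> \<xi>"
    and comp: "\<And>\<xi> \<phi> \<psi>. C1 \<Omega> \<phi> \<Longrightarrow> C1 \<Omega> \<psi> \<Longrightarrow> dd (\<lambda>u. g u (\<phi> u) (\<psi> u)) v \<xi>
                 = g v (covd A \<xi> \<phi> v) (\<psi> v) + g v (\<phi> v) (covd A \<xi> \<psi> v)"
    using LC v unfolding levi_civita_def C1_metric_def by auto
  have sym: "\<And>x y. g v x y = g v y x" using rm v unfolding riemannian_metric_def by blast
  have X: "dd (\<lambda>u. g u b c) v a = g v (A v a b) c + g v b (A v a c)" for a b c
    using comp[of "\<lambda>_. b" "\<lambda>_. c" a, OF C1_const C1_const] by (simp add: covd_def dd_const)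
  have e1: "A v \<eta> \<xi> = A v \<xi> \<eta>" "A v \<zeta> \<xi> = A v \<xi> \<zeta>" "A v \<zeta> \<eta> = A v \<eta> \<zeta>" using sA by auto
  have e2: "g v \<eta> (A v \<xi> \<zeta>) = g v (A v \<xi> \<zeta>) \<eta>" by (rule sym)
  show ?thesis unfolding X e1 e2 by simp
qed

locale setting =
  fixes \<Omega> :: "'a::{real_vector,t2_space} set" and \<Omega>' :: "'b::{real_vector,t2_space} set"
    and g :: "'a \<Rightarrow> 'a \<Rightarrow> 'a \<Rightarrow> real" and g' :: "'b \<Rightarrow> 'b \<Rightarrow> 'b \<Rightarrow> real"
    and A :: "'a \<Rightarrow> 'a \<Rightarrow> 'a \<Rightarrow> 'a" and A' :: "'b \<Rightarrow> 'b \<Rightarrow> 'b \<Rightarrow> 'b"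
    and F :: "'b \<Rightarrow> 'a"
  assumes tva: "tvs TYPE('a)" and tvb: "tvs TYPE('b)" and lca: "lc TYPE('a)" and lcb: "lc TYPE('b)"
    and O: "open \<Omega>" and O': "open \<Omega>'"
    and LC: "levi_civita \<Omega> g A" and LC': "levi_civita \<Omega>' g' A'"
    and iso: "C2_isometry \<Omega>' g' \<Omega> g F"
begin

definition "\<Phi> = (\<lambda>(v, \<xi>). dd F v \<xi>)"

lemma CF: "C1 \<Omega>' F" and CPhi: "C1 (\<Omega>' \<times> UNIV) \<Phi>" and Ci: "C1 (F ` \<Omega>') (the_inv_into \<Omega>' F)"
  and oF: "open (F ` \<Omega>')" and sub: "F ` \<Omega>' \<subseteq> \<Omega>" and inj: "inj_on F \<Omega>'"
  and isoeq: "\<And>w \<zeta>. w \<in> \<Omega>' \<Longrightarrow> g (F w) (dd F w \<zeta>) (dd F w \<zeta>) = g' w \<zeta> \<zeta>"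
  using iso unfolding C2_isometry_def C2_diffeo_onto_open_def C2_def \<Phi>_def by auto

lemma rm: "riemannian_metric \<Omega> g" and rm': "riemannian_metric \<Omega>' g'"
  and CG: "C1 (\<Omega> \<times> UNIV \<times> UNIV) (\<lambda>(v, \<xi>, \<eta>). g v \<xi> \<eta>)"
  using LC LC' unfolding levi_civita_def C1_metric_def by auto

lemma Fin: "w \<in> \<Omega>' \<Longrightarrow> F w \<in> \<Omega>" using sub by auto

lemma tv3: "tvs TYPE('a \<times> 'a \<times> 'a)" by (intro tvs_prod tva)
lemma lc3: "lc TYPE('a \<times> 'a \<times> 'a)" by (intro lc_prod lca)
lemma tv2: "tvs TYPE('b \<times> 'b)" by (intro tvs_prod tvb)
lemma lc2: "lc TYPE('b \<times> 'b)" by (intro lc_prod lcb)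

lemma dF_add: "w \<in> \<Omega>' \<Longrightarrow> dd F w (x + y) = dd F w x + dd F w y"
  by (rule dd_add[OF tvb lcb tva lca O' CF])
lemma dF_scale: "w \<in> \<Omega>' \<Longrightarrow> dd F w (c *\<^sub>R x) = c *\<^sub>R dd F w x"
  by (rule dd_scale[OF tva CF])
lemma dF_minus: "w \<in> \<Omega>' \<Longrightarrow> dd F w (- x) = - dd F w x"
  by (rule dd_minus[OF tva CF])

lemma g_props:
  assumes "v \<in> \<Omega>"
  shows "g v (a + b) c = g v a c + g v b c" "g v (r *\<^sub>R a) c = r * g v a c"
    "g v a (b + c) = g v a b + g v a c" "g v a (r *\<^sub>R b) = r * g v a b"
    "g v a b = g v b a"
proof -
  have l1: "linear (\<lambda>\<xi>. g v \<xi> c)" and l2: "linear (g v a)" and s: "\<And>x y. g v x y = g v y x"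
    using rm assms unfolding riemannian_metric_def by auto
  show "g v (a + b) c = g v a c + g v b c" using real_vector.linear_add[OF l1] by simp
  show "g v (r *\<^sub>R a) c = r * g v a c" using linear_cmul[OF l1] by simp
  show "g v a (b + c) = g v a b + g v a c" using real_vector.linear_add[OF l2] by simp
  show "g v a (r *\<^sub>R b) = r * g v a b" using linear_cmul[OF l2] by simp
  show "g v a b = g v b a" by (rule s)
qed

lemma g'_props:
  assumes "w \<in> \<Omega>'"
  shows "g' w (a + b) c = g' w a c + g' w b c" "g' w a (b + c) = g' w a b + g' w a c" "g' w a b = g' w b a"
proof -
  have l1: "linear (\<lambda>\<xi>. g' w \<xi> c)" and l2: "linear (g' w a)" and s: "\<And>x y. g' w x y = g' w y x"
    using rm' assms unfolding riemannian_metric_def by auto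
  show "g' w (a + b) c = g' w a c + g' w b c" using real_vector.linear_add[OF l1] by simp
  show "g' w a (b + c) = g' w a b + g' w a c" using real_vector.linear_add[OF l2] by simp
  show "g' w a b = g' w b a" by (rule s)
qed

lemma polar:
  assumes w: "w \<in> \<Omega>'"
  shows "g' w a b = g (F w) (dd F w a) (dd F w b)"
proof -
  have v: "F w \<in> \<Omega>" by (rule Fin[OF w])
  note gp = g_props[OF v] and gp' = g'_props[OF w]
  have "g' w (a + b) (a + b) = g' w a a + 2 * g' w a b + g' w b b"
    using gp' by simp
  moreover have "g (F w) (dd F w (a + b)) (dd F w (a + b)) = g (F w) (dd F w a) (dd F w a)
        + 2 * g (F w) (dd F w a) (dd F w b) + g (F w) (dd F w b) (dd F w b)"
    using gp by (simp add: dF_add[OF w])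
  ultimately show ?thesis using isoeq[OF w, of "a + b"] isoeq[OF w, of a] isoeq[OF w, of b] by simp
qed

end

context setting begin

definition "G = (\<lambda>(v, \<xi>, \<eta>). g v \<xi> \<eta>)"
definition "D w a b = dd \<Phi> (w, b) (a, 0)"

lemma G1: "dd G (v, a, b) (\<alpha>, 0, 0) = dd (\<lambda>u. g u a b) v \<alpha>"
  unfolding dd_def G_def by (simp add: diffquot_def[abs_def])

lemma G2: assumes v: "v \<in> \<Omega>" shows "dd G (v, a, b) (0, \<beta>, 0) = g v \<beta> b"
proof (rule dd_unique)
  have "eventually (\<lambda>r. diffquot G (v, a, b) (0, \<beta>, 0) r = g v \<beta> b) (at 0)"
    using at0_neq by (rule eventually_mono) (simp add: diffquot_def G_def g_props[OF v] field_simps)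
  then show "(diffquot G (v, a, b) (0, \<beta>, 0) \<longlongrightarrow> g v \<beta> b) (at 0)" using tendsto_cong by fastforce
qed

lemma G3: assumes v: "v \<in> \<Omega>" shows "dd G (v, a, b) (0, 0, \<gamma>) = g v a \<gamma>"
proof (rule dd_unique)
  have "eventually (\<lambda>r. diffquot G (v, a, b) (0, 0, \<gamma>) r = g v a \<gamma>) (at 0)"
    using at0_neq by (rule eventually_mono) (simp add: diffquot_def G_def g_props[OF v] field_simps)
  then show "(diffquot G (v, a, b) (0, 0, \<gamma>) \<longlongrightarrow> g v a \<gamma>) (at 0)" using tendsto_cong by fastforce
qed

lemma CG': "C1 (\<Omega> \<times> UNIV \<times> UNIV) G" using CG unfolding G_def .
lemma oU3: "open (\<Omega> \<times> (UNIV :: 'a set) \<times> (UNIV :: 'a set))" using O by (simp add: open_Times)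

lemma Gdd: assumes v: "v \<in> \<Omega>"
  shows "dd G (v, a, b) (\<alpha>, \<beta>, \<gamma>) = dd (\<lambda>u. g u a b) v \<alpha> + g v \<beta> b + g v a \<gamma>"
proof -
  have oU: "open (\<Omega> \<times> (UNIV :: 'a set) \<times> (UNIV :: 'a set))" using O by (simp add: open_Times)
  have p: "(v, a, b) \<in> \<Omega> \<times> UNIV \<times> UNIV" using v by simp
  have "(\<alpha>, \<beta>, \<gamma>) = (\<alpha>, 0, 0) + ((0, \<beta>, 0) + (0, 0, \<gamma>))" by simp
  then have "dd G (v, a, b) (\<alpha>, \<beta>, \<gamma>) = dd G (v, a, b) (\<alpha>, 0, 0) + (dd G (v, a, b) (0, \<beta>, 0) + dd G (v, a, b) (0, 0, \<gamma>))"
    using dd_add[OF tv3 lc3 tvs_real lc_real oU CG' p] by metis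
  then show ?thesis using G1 G2[OF v] G3[OF v] by simp
qed

lemma D_lim: assumes w: "w \<in> \<Omega>'"
  shows "(diffquot (\<lambda>u. dd F u b) w a \<longlongrightarrow> D w a b) (at 0)"
proof -
  have "(diffquot \<Phi> (w, b) (a, 0) \<longlongrightarrow> D w a b) (at 0)"
    unfolding D_def by (rule C1_hasdd[OF CPhi]) (use w in simp)
  moreover have "diffquot (\<lambda>u. dd F u b) w a = diffquot \<Phi> (w, b) (a, 0)"
    using slice_dq1[of \<Phi> b w a] by (simp add: \<Phi>_def)
  ultimately show ?thesis by simp
qed

lemma D_sym: assumes w: "w \<in> \<Omega>'" shows "D w a b = D w b a"
  unfolding D_def \<Phi>_def using schwarz[OF tvb lcb tva lca O' CF CPhi[unfolded \<Phi>_def] w] by simp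

lemma der_g':
  assumes w: "w \<in> \<Omega>'"
  shows "dd (\<lambda>u. g' u \<eta> \<zeta>) w \<xi> = dd (\<lambda>u. g u (dd F w \<eta>) (dd F w \<zeta>)) (F w) (dd F w \<xi>)
          + g (F w) (D w \<xi> \<eta>) (dd F w \<zeta>) + g (F w) (dd F w \<eta>) (D w \<xi> \<zeta>)"
proof (rule dd_unique)
  define \<psi> where "\<psi> u = (F u, dd F u \<eta>, dd F u \<zeta>)" for u
  have dpsi: "(diffquot \<psi> w \<xi> \<longlongrightarrow> (dd F w \<xi>, D w \<xi> \<eta>, D w \<xi> \<zeta>)) (at 0)"
  proof -
    have "((\<lambda>r. (diffquot F w \<xi> r, diffquot (\<lambda>u. dd F u \<eta>) w \<xi> r, diffquot (\<lambda>u. dd F u \<zeta>) w \<xi> r))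
          \<longlongrightarrow> (dd F w \<xi>, D w \<xi> \<eta>, D w \<xi> \<zeta>)) (at 0)"
      by (rule tendsto_Pair[OF C1_hasdd[OF CF w] tendsto_Pair[OF D_lim[OF w] D_lim[OF w]]])
    moreover have "(\<lambda>r. (diffquot F w \<xi> r, diffquot (\<lambda>u. dd F u \<eta>) w \<xi> r, diffquot (\<lambda>u. dd F u \<zeta>) w \<xi> r))
        = diffquot \<psi> w \<xi>"
      by (simp add: fun_eq_iff diffquot_def \<psi>_def)
    ultimately show ?thesis by simp
  qed
  have 1: "(diffquot (\<lambda>u. G (\<psi> u)) w \<xi> \<longlongrightarrow> dd G (\<psi> w) (dd F w \<xi>, D w \<xi> \<eta>, D w \<xi> \<zeta>)) (at 0)"
    by (rule chain_dd[OF tv3 lc3 tvs_real lc_real oU3 CG' _ dpsi]) (use Fin[OF w] in \<open>auto simp: \<psi>_def\<close>)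
  have 2: "dd G (\<psi> w) (dd F w \<xi>, D w \<xi> \<eta>, D w \<xi> \<zeta>) = dd (\<lambda>u. g u (dd F w \<eta>) (dd F w \<zeta>)) (F w) (dd F w \<xi>)
          + g (F w) (D w \<xi> \<eta>) (dd F w \<zeta>) + g (F w) (dd F w \<eta>) (D w \<xi> \<zeta>)"
    unfolding \<psi>_def by (rule Gdd[OF Fin[OF w]])
  have "eventually (\<lambda>r. diffquot (\<lambda>u. G (\<psi> u)) w \<xi> r = diffquot (\<lambda>u. g' u \<eta> \<zeta>) w \<xi> r) (at 0)"
    by (rule dd_local(2)[OF tvb O' w]) (simp add: G_def \<psi>_def polar)
  with 1 2 show "(diffquot (\<lambda>u. g' u \<eta> \<zeta>) w \<xi> \<longlongrightarrow> dd (\<lambda>u. g u (dd F w \<eta>) (dd F w \<zeta>)) (F w) (dd F w \<xi>)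
          + g (F w) (D w \<xi> \<eta>) (dd F w \<zeta>) + g (F w) (dd F w \<eta>) (D w \<xi> \<zeta>)) (at 0)"
    using tendsto_cong by fastforce
qed

end

context setting begin

lemma g_diff: assumes v: "v \<in> \<Omega>" shows "g v (a - b) c = g v a c - g v b c"
proof -
  have "g v (a - b) c = g v (a + (-1) *\<^sub>R b) c" by simp
  also have "\<dots> = g v a c + (-1) * g v b c" by (simp only: g_props(1,2)[OF v])
  finally show ?thesis by simp
qed

lemma TL:
  assumes w: "w \<in> \<Omega>'"
  shows "dd F w (A' w \<xi> \<eta>) = A (F w) (dd F w \<xi>) (dd F w \<eta>) + D w \<xi> \<eta>"
proof -
  define v where "v = F w"
  have v: "v \<in> \<Omega>" unfolding v_def by (rule Fin[OF w])
  define y where "y = dd F w (A' w \<xi> \<eta>) - A v (dd F w \<xi>) (dd F w \<eta>) - D w \<xi> \<eta>"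
  have key: "g v y (dd F w \<zeta>) = 0" for \<zeta>
  proof -
    note K' = koszul[OF LC' w, of \<xi> \<eta> \<zeta>]
    note K = koszul[OF LC v, of "dd F w \<xi>" "dd F w \<eta>" "dd F w \<zeta>"]
    note d1 = der_g'[OF w, of \<eta> \<zeta> \<xi>] and d2 = der_g'[OF w, of \<xi> \<zeta> \<eta>] and d3 = der_g'[OF w, of \<xi> \<eta> \<zeta>]
    have s1: "D w \<eta> \<xi> = D w \<xi> \<eta>" "D w \<zeta> \<xi> = D w \<xi> \<zeta>" "D w \<zeta> \<eta> = D w \<eta> \<zeta>"
      using D_sym[OF w] by auto
    have s2: "g v (dd F w \<eta>) (D w \<xi> \<zeta>) = g v (D w \<xi> \<zeta>) (dd F w \<eta>)"
       "g v (dd F w \<xi>) (D w \<eta> \<zeta>) = g v (D w \<eta> \<zeta>) (dd F w \<xi>)"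
      using g_props(5)[OF v] by auto
    have "2 * g' w (A' w \<xi> \<eta>) \<zeta> = 2 * g v (A v (dd F w \<xi>) (dd F w \<eta>)) (dd F w \<zeta>) + 2 * g v (D w \<xi> \<eta>) (dd F w \<zeta>)"
      using K' K[unfolded v_def] d1 d2[unfolded s1] d3[unfolded s1] s2[unfolded v_def] unfolding v_def by linarith
    moreover have "g' w (A' w \<xi> \<eta>) \<zeta> = g v (dd F w (A' w \<xi> \<eta>)) (dd F w \<zeta>)" unfolding v_def by (rule polar[OF w])
    ultimately show ?thesis unfolding y_def using g_diff[OF v] by simp
  qed
  obtain \<zeta> where "dd F w \<zeta> = y" using surj_dF[OF tva lca tvb lcb O' CF inj oF Ci w] by blast
  with key have "g v y y = 0" by metis
  then have "y = 0" using rm v unfolding riemannian_metric_def by (metis less_irrefl)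
  then show ?thesis unfolding y_def v_def by (simp add: algebra_simps)
qed

end

lemma nontriv_within:
  assumes I: "is_interval (I::real set)" "interior I \<noteq> {}" and t: "t \<in> I"
  shows "at t within I \<noteq> bot"
proof -
  obtain x where x: "x \<in> interior I" using I(2) by blast
  then obtain e where e0: "e > 0" "ball x e \<subseteq> interior I"
    using open_interior[of I] unfolding open_contains_ball by blast
  then have e: "e > 0" "ball x e \<subseteq> I" using interior_subset[of I] by auto
  have "x - e/2 \<in> ball x e" "x + e/2 \<in> ball x e" using e by (simp_all add: dist_real_def)
  then have x1: "x - e/2 \<in> I" "x + e/2 \<in> I" using e(2) by blast+
  have conv: "\<And>a b u. a \<in> I \<Longrightarrow> b \<in> I \<Longrightarrow> a \<le> u \<Longrightarrow> u \<le> b \<Longrightarrow> u \<in> I"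
    using I(1) unfolding is_interval_1 by blast
  show ?thesis
  proof (cases "t < x")
    case True
    then have "{t..x + e/2} \<subseteq> I" using conv[OF t x1(2)] by auto
    moreover have "t islimpt {t..x + e/2}" using True e by simp
    ultimately have "t islimpt I" by (rule islimpt_subset[rotated])
    then show ?thesis using trivial_limit_within[of t I] by (simp add: trivial_limit_def)
  next
    case False
    then have "{x - e/2..t} \<subseteq> I" using conv[OF x1(1) t] by auto
    moreover have "t islimpt {x - e/2..t}" using False e by simp
    ultimately have "t islimpt I" by (rule islimpt_subset[rotated])
    then show ?thesis using trivial_limit_within[of t I] by (simp add: trivial_limit_def)
  qed
qed

lemma cderiv_eq:
  assumes "at t within I \<noteq> bot" "((\<lambda>s. inverse (s - t) *\<^sub>R (x s - x t)) \<longlongrightarrow> l) (at t within I)"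
  shows "cderiv x I t = l"
  unfolding cderiv_def by (rule tendsto_Lim) (use assms in \<open>auto simp: trivial_limit_def\<close>)

lemma C1_curve_deriv:
  assumes "C1_curve I x" "at t within I \<noteq> bot" "t \<in> I"
  shows "((\<lambda>s. inverse (s - t) *\<^sub>R (x s - x t)) \<longlongrightarrow> cderiv x I t) (at t within I)"
proof -
  obtain l where l: "((\<lambda>s. inverse (s - t) *\<^sub>R (x s - x t)) \<longlongrightarrow> l) (at t within I)"
    using assms unfolding C1_curve_def by blast
  with cderiv_eq[OF assms(2) l] show ?thesis by simp
qed

lemma cderiv_cong:
  assumes "\<And>s. s \<in> I \<Longrightarrow> x s = x' s" "t \<in> I"
  shows "cderiv x I t = cderiv x' I t"
proof -
  have evc: "eventually (\<lambda>s. inverse (s - t) *\<^sub>R (x s - x t) = inverse (s - t) *\<^sub>R (x' s - x' t)) (at t within I)"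
    using assms by (auto simp: eventually_at_filter)
  have "(\<lambda>l. ((\<lambda>s. inverse (s - t) *\<^sub>R (x s - x t)) \<longlongrightarrow> l) (at t within I))
     = (\<lambda>l. ((\<lambda>s. inverse (s - t) *\<^sub>R (x' s - x' t)) \<longlongrightarrow> l) (at t within I))"
    by (rule ext) (rule tendsto_cong[OF evc])
  then show ?thesis unfolding cderiv_def t2_space_class.Lim_def by simp
qed

lemma C1_curve_cong:
  assumes "\<And>s. s \<in> I \<Longrightarrow> x s = x' s" "C1_curve I x"
  shows "C1_curve I x'"
proof -
  have ev: "eventually (\<lambda>s. inverse (s - t) *\<^sub>R (x s - x t) = inverse (s - t) *\<^sub>R (x' s - x' t)) (at t within I)"
    if "t \<in> I" for t
    using assms that by (auto simp: eventually_at_filter)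
  have "\<forall>t\<in>I. \<exists>l. ((\<lambda>s. inverse (s - t) *\<^sub>R (x' s - x' t)) \<longlongrightarrow> l) (at t within I)"
  proof
    fix t assume t: "t \<in> I"
    obtain l where "((\<lambda>s. inverse (s - t) *\<^sub>R (x s - x t)) \<longlongrightarrow> l) (at t within I)"
      using assms(2) t unfolding C1_curve_def by blast
    then show "\<exists>l. ((\<lambda>s. inverse (s - t) *\<^sub>R (x' s - x' t)) \<longlongrightarrow> l) (at t within I)"
      using tendsto_cong[OF ev[OF t]] by blast
  qed
  moreover have "continuous_on I (cderiv x' I)"
  proof -
    have "continuous_on I (cderiv x I)" using assms(2) unfolding C1_curve_def by blast
    moreover have "\<And>t. t \<in> I \<Longrightarrow> cderiv x I t = cderiv x' I t" by (rule cderiv_cong[OF assms(1)])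
    ultimately show ?thesis using continuous_on_cong[of I I "cderiv x I" "cderiv x' I"] by simp
  qed
  ultimately show ?thesis unfolding C1_curve_def by blast
qed

lemma C1_curve_cont:
  fixes x :: "real \<Rightarrow> 'e::{real_vector,t2_space}"
  assumes tv: "tvs TYPE('e)" and c: "C1_curve I x"
  shows "continuous_on I x"
  unfolding continuous_on_def
proof
  fix t assume t: "t \<in> I"
  obtain l where "((\<lambda>s. inverse (s - t) *\<^sub>R (x s - x t)) \<longlongrightarrow> l) (at t within I)"
    using c t unfolding C1_curve_def by blast
  then show "(x \<longlongrightarrow> x t) (at t within I)" by (rule curve_cont[OF tv])
qed

context setting begin

lemma oPhi: "open (\<Omega>' \<times> (UNIV :: 'b set))" using O' by (simp add: open_Times)

lemma Phi_simp: "\<Phi> (a, b) = dd F a b" by (simp add: \<Phi>_def)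

lemma dPhi2: assumes w: "w \<in> \<Omega>'" shows "dd \<Phi> (w, e) (0, \<zeta>) = dd F w \<zeta>"
proof (rule dd_unique)
  have "eventually (\<lambda>r. diffquot \<Phi> (w, e) (0, \<zeta>) r = dd F w \<zeta>) (at 0)"
    using at0_neq by (rule eventually_mono) (simp add: diffquot_def Phi_simp dF_add[OF w] dF_scale[OF w])
  then show "(diffquot \<Phi> (w, e) (0, \<zeta>) \<longlongrightarrow> dd F w \<zeta>) (at 0)" using tendsto_cong by fastforce
qed

lemma par:
  assumes I: "is_interval I" "interior I \<noteq> {}" and pl: "parallel_lift \<Omega>' A' I y \<eta>"
  shows "parallel_lift \<Omega> A I (F \<circ> y) (\<lambda>t. dd F (y t) (\<eta> t))
      \<and> (\<forall>t\<in>I. cderiv (F \<circ> y) I t = dd F (y t) (cderiv y I t))"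
proof -
  have yI: "\<And>t. t \<in> I \<Longrightarrow> y t \<in> \<Omega>'" and cy: "C1_curve I y" and ce: "C1_curve I \<eta>"
    and eq: "\<And>t. t \<in> I \<Longrightarrow> cderiv \<eta> I t + A' (y t) (cderiv y I t) (\<eta> t) = 0"
    using pl unfolding parallel_lift_def by auto
  have nt: "\<And>t. t \<in> I \<Longrightarrow> at t within I \<noteq> bot" by (rule nontriv_within[OF I])
  define y' where "y' = cderiv y I"
  define e' where "e' = cderiv \<eta> I"
  have dy: "\<And>t. t \<in> I \<Longrightarrow> ((\<lambda>s. inverse (s - t) *\<^sub>R (y s - y t)) \<longlongrightarrow> y' t) (at t within I)"
    unfolding y'_def by (rule C1_curve_deriv[OF cy nt])
  have de: "\<And>t. t \<in> I \<Longrightarrow> ((\<lambda>s. inverse (s - t) *\<^sub>R (\<eta> s - \<eta> t)) \<longlongrightarrow> e' t) (at t within I)"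
    unfolding e'_def by (rule C1_curve_deriv[OF ce nt])
  have ycont: "continuous_on I y" by (rule C1_curve_cont[OF tvb cy])
  have econt: "continuous_on I \<eta>" by (rule C1_curve_cont[OF tvb ce])
  have y'cont: "continuous_on I y'" using cy unfolding C1_curve_def y'_def by blast
  have e'cont: "continuous_on I e'" using ce unfolding C1_curve_def e'_def by blast
  have dFy: "((\<lambda>s. inverse (s - t) *\<^sub>R ((F \<circ> y) s - (F \<circ> y) t)) \<longlongrightarrow> dd F (y t) (y' t)) (at t within I)"
    if t: "t \<in> I" for t
    using chain_curve[OF tvb lcb tva lca O' CF yI[OF t] dy[OF t]] by (simp add: o_def)
  have cFy: "\<And>t. t \<in> I \<Longrightarrow> cderiv (F \<circ> y) I t = dd F (y t) (y' t)"
    by (rule cderiv_eq[OF nt dFy])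
  have contFy: "continuous_on I (\<lambda>t. dd F (y t) (y' t))"
  proof -
    have "continuous_on I (\<lambda>t. (\<lambda>(v, \<xi>). dd F v \<xi>) (y t, y' t))"
      by (rule continuous_on_compose2[OF C1_cont[OF CF] continuous_on_Pair[OF ycont y'cont]]) (use yI in auto)
    then show ?thesis by simp
  qed
  have C1Fy: "C1_curve I (F \<circ> y)"
    unfolding C1_curve_def
  proof
    show "\<forall>t\<in>I. \<exists>l. ((\<lambda>s. inverse (s - t) *\<^sub>R ((F \<circ> y) s - (F \<circ> y) t)) \<longlongrightarrow> l) (at t within I)"
      using dFy by blast
    show "continuous_on I (cderiv (F \<circ> y) I)"
      using contFy continuous_on_cong[of I I "cderiv (F \<circ> y) I" "\<lambda>t. dd F (y t) (y' t)"] cFy by simp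
  qed
  define \<xi> where "\<xi> t = dd F (y t) (\<eta> t)" for t
  have dxi: "((\<lambda>s. inverse (s - t) *\<^sub>R (\<xi> s - \<xi> t)) \<longlongrightarrow> dd \<Phi> (y t, \<eta> t) (y' t, e' t)) (at t within I)"
    if t: "t \<in> I" for t
  proof -
    have dc: "((\<lambda>s. inverse (s - t) *\<^sub>R ((y s, \<eta> s) - (y t, \<eta> t))) \<longlongrightarrow> (y' t, e' t)) (at t within I)"
      using tendsto_Pair[OF dy[OF t] de[OF t]] by simp
    have "(y t, \<eta> t) \<in> \<Omega>' \<times> UNIV" using yI[OF t] by simp
    from chain_curve[OF tv2 lc2 tva lca oPhi CPhi this dc]
    show ?thesis by (simp add: \<xi>_def Phi_simp)
  qed
  have cxi: "\<And>t. t \<in> I \<Longrightarrow> cderiv \<xi> I t = dd \<Phi> (y t, \<eta> t) (y' t, e' t)"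
    by (rule cderiv_eq[OF nt dxi])
  have contxi: "continuous_on I (\<lambda>t. dd \<Phi> (y t, \<eta> t) (y' t, e' t))"
  proof -
    have "continuous_on I (\<lambda>t. (\<lambda>(v, \<xi>). dd \<Phi> v \<xi>) ((y t, \<eta> t), (y' t, e' t)))"
      by (rule continuous_on_compose2[OF C1_cont[OF CPhi]
            continuous_on_Pair[OF continuous_on_Pair[OF ycont econt] continuous_on_Pair[OF y'cont e'cont]]])
         (use yI in auto)
    then show ?thesis by simp
  qed
  have C1xi: "C1_curve I \<xi>"
    unfolding C1_curve_def
  proof
    show "\<forall>t\<in>I. \<exists>l. ((\<lambda>s. inverse (s - t) *\<^sub>R (\<xi> s - \<xi> t)) \<longlongrightarrow> l) (at t within I)"
      using dxi by blast
    show "continuous_on I (cderiv \<xi> I)"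
      using contxi continuous_on_cong[of I I "cderiv \<xi> I" "\<lambda>t. dd \<Phi> (y t, \<eta> t) (y' t, e' t)"] cxi by simp
  qed
  have eqxi: "cderiv \<xi> I t + A ((F \<circ> y) t) (cderiv (F \<circ> y) I t) (\<xi> t) = 0" if t: "t \<in> I" for t
  proof -
    have w: "y t \<in> \<Omega>'" by (rule yI[OF t])
    have e'eq: "e' t = - A' (y t) (y' t) (\<eta> t)" using eq[OF t] unfolding e'_def y'_def by (simp add: eq_neg_iff_add_eq_0)
    have "(y' t, e' t) = (y' t, 0) + (0, e' t)" by simp
    then have "cderiv \<xi> I t = dd \<Phi> (y t, \<eta> t) (y' t, 0) + dd \<Phi> (y t, \<eta> t) (0, e' t)"
      using dd_add[OF tv2 lc2 tva lca oPhi CPhi, of "(y t, \<eta> t)" "(y' t, 0)" "(0, e' t)"] w cxi[OF t] by simp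
    also have "\<dots> = D (y t) (y' t) (\<eta> t) + dd F (y t) (e' t)"
      by (simp add: D_def dPhi2[OF w])
    also have "\<dots> = - A (F (y t)) (dd F (y t) (y' t)) (dd F (y t) (\<eta> t))"
      unfolding e'eq by (simp add: dF_minus[OF w] TL[OF w])
    finally show ?thesis using cFy[OF t] by (simp add: \<xi>_def)
  qed
  have "parallel_lift \<Omega> A I (F \<circ> y) \<xi>"
    unfolding parallel_lift_def using yI Fin C1Fy C1xi eqxi by auto
  then show ?thesis using cFy unfolding \<xi>_def y'_def by simp
qed

lemma geo:
  assumes I: "is_interval I" "interior I \<noteq> {}" and gy: "geodesic \<Omega>' A' I y"
  shows "geodesic \<Omega> A I (F \<circ> y)"
proof -
  have yI: "\<And>t. t \<in> I \<Longrightarrow> y t \<in> \<Omega>'" and c2: "C2_curve I y"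
    and eq: "\<And>t. t \<in> I \<Longrightarrow> cderiv (cderiv y I) I t + A' (y t) (cderiv y I t) (cderiv y I t) = 0"
    using gy unfolding geodesic_def by auto
  have "parallel_lift \<Omega>' A' I y (cderiv y I)"
    using yI c2 eq unfolding parallel_lift_def C2_curve_def by auto
  from par[OF I this] have pl: "parallel_lift \<Omega> A I (F \<circ> y) (\<lambda>t. dd F (y t) (cderiv y I t))"
    and cF: "\<And>t. t \<in> I \<Longrightarrow> cderiv (F \<circ> y) I t = dd F (y t) (cderiv y I t)" by auto
  have c1: "C1_curve I (F \<circ> y)" and c1x: "C1_curve I (\<lambda>t. dd F (y t) (cderiv y I t))"
    and eqx: "\<And>t. t \<in> I \<Longrightarrow> cderiv (\<lambda>t. dd F (y t) (cderiv y I t)) I t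
        + A ((F \<circ> y) t) (cderiv (F \<circ> y) I t) (dd F (y t) (cderiv y I t)) = 0"
    and inO: "\<And>t. t \<in> I \<Longrightarrow> (F \<circ> y) t \<in> \<Omega>"
    using pl unfolding parallel_lift_def by auto
  have cc: "\<And>s. s \<in> I \<Longrightarrow> (\<lambda>t. dd F (y t) (cderiv y I t)) s = cderiv (F \<circ> y) I s" using cF by simp
  have c1': "C1_curve I (cderiv (F \<circ> y) I)" by (rule C1_curve_cong[OF cc c1x])
  have "cderiv (cderiv (F \<circ> y) I) I t + A ((F \<circ> y) t) (cderiv (F \<circ> y) I t) (cderiv (F \<circ> y) I t) = 0"
    if t: "t \<in> I" for t
    using eqx[OF t] cderiv_cong[OF cc t] cF[OF t] by simp
  then show ?thesis unfolding geodesic_def C2_curve_def using inO c1 c1' by auto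
qed

end

theorem lemma6p5:
  fixes \<Omega> :: "'a::{real_vector,t2_space} set" and \<Omega>' :: "'b::{real_vector,t2_space} set"
    and g :: "'a \<Rightarrow> 'a \<Rightarrow> 'a \<Rightarrow> real" and g' :: "'b \<Rightarrow> 'b \<Rightarrow> 'b \<Rightarrow> real"
    and A :: "'a \<Rightarrow> 'a \<Rightarrow> 'a \<Rightarrow> 'a" and A' :: "'b \<Rightarrow> 'b \<Rightarrow> 'b \<Rightarrow> 'b"
    and F :: "'b \<Rightarrow> 'a"
  assumes "lcs_space TYPE('a)" and "lcs_space TYPE('b)"
    and "open \<Omega>" and "open \<Omega>'"
    and "riemannian_metric \<Omega> g" and "riemannian_metric \<Omega>' g'"
    and "levi_civita \<Omega> g A" and "levi_civita \<Omega>' g' A'"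
    and "C1_connection \<Omega> A" and "C1_connection \<Omega>' A'"
    and "C2_isometry \<Omega>' g' \<Omega> g F"
  shows "(\<forall>(I::real set) y \<eta>. is_interval I \<and> interior I \<noteq> {} \<longrightarrow>
            parallel_lift \<Omega>' A' I y \<eta> \<longrightarrow>
            parallel_lift \<Omega> A I (F \<circ> y) (\<lambda>t. dd F (y t) (\<eta> t)))
       \<and> (\<forall>(I::real set) y. is_interval I \<and> interior I \<noteq> {} \<longrightarrow>
            geodesic \<Omega>' A' I y \<longrightarrow> geodesic \<Omega> A I (F \<circ> y))"
proof -
  interpret setting \<Omega> \<Omega>' g g' A A' F
    using assms lcs_tvs[OF assms(1)] lcs_tvs[OF assms(2)] lcs_lc[OF assms(1)] lcs_lc[OF assms(2)]
    by unfold_locales auto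
  show ?thesis using par geo by blast
qed

end
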